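(* Let $(\Omega,\mathfrak S,\mathbb P,\{T_z:z\in\mathcal G\})$ be a measurable ergodic dynamical system and $\ell\ge0$. Let $g_k,g:\Omega\times\mathcal R^\ell\to\mathbb R$ be measurable with $g_k(\cdot,z_{1,\ell}),g(\cdot,z_{1,\ell})\in L^1(\mathbb P)$ and $g_k(\cdot,z_{1,\ell})\to g(\cdot,z_{1,\ell})$ in $L^1(\mathbb P)$ as $k\to\infty$, for each $z_{1,\ell}\in\mathcal R^\ell$. Then \[\underline K_\ell(g)\le\liminf_{k\to\infty}\underline K_\ell(g_k).\]
   Context: Fix $d$, finite $\mathcal R\subset\mathbb Z^d$, $\mathcal G$ the additive subgroup generated by $\mathcal R$; $T_z$ measurable commuting bijections with $T_{x+y}=T_xT_y$, $T_0=\mathrm{id}$, $\mathbb P$ invariant and ergodic. $\Omega_\ell=\Omega\times\mathcal R^\ell$, $\eta=(\omega,z_{1,\ell})$, $z_{i,j}=(z_i,\dots,z_j)$; $S_z(\omega,z_{1,\ell})=(T_{z_1}\omega,(z_{2,\ell},z))$ ($S_z\omega=T_z\omega$ if $\ell=0$). Class $\mathcal K$: measurable $F:\Omega_\ell\times\mathcal R\to\mathbb R$ with (i) $F(\cdot,z_{1,\ell},z)\in L^1(\mathbb P)$; (ii) for all $n\ge\ell$, $a_{1,n}\in\mathcal R^n$, $\eta_0=(\omega,a_{n-\ell+1,n})$, $\eta_i=S_{a_i}\eta_{i-1}$: $\mathbb E\sum_{i<n}F(\eta_i,a_{i+1})=0$; (iii) for a.e. $\omega$, any two step sequences from a common $\eta_0=(\omega,z_{1,\ell})$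 reaching the same point give equal sums $\sum F(\eta_i,a_{i+1})$. For $g$ with integrable sections, $K_{\ell,F}(g)=\mathbb P\text{-}\operatorname{ess\,sup}_\omega\max_{z_{1,\ell}}\log\sum_{z\in\mathcal R}|\mathcal R|^{-1}e^{g(\eta)+F(\eta,z)}$ and $\underline K_\ell(g)=\inf_{F\in\mathcal K}K_{\ell,F}(g)$. *)

theory Defs
  imports "HOL-Probability.Probability"
begin

text \<open>Points of Z^d are represented by the type int^'d (d = CARD('d) fixed).
  States eta = (omega, z_{1,l}) of Omega_l are pairs with a list of length l.\<close>

inductive_set gen_group :: "('z::ab_group_add) set \<Rightarrow> 'z set" for R where
  gg_zero: "0 \<in> gen_group R"
| gg_base: "x \<in> R \<Longrightarrow> x \<in> gen_group R"
| gg_add: "x \<in> gen_group R \<Longrightarrow> y \<in> gen_group R \<Longrightarrow> x + y \<in> gen_group R"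
| gg_neg: "x \<in> gen_group R \<Longrightarrow> - x \<in> gen_group R"

definition ergodic_system :: "'a measure \<Rightarrow> (int^'d \<Rightarrow> 'a \<Rightarrow> 'a) \<Rightarrow> (int^'d) set \<Rightarrow> bool" where
  "ergodic_system M T R \<longleftrightarrow>
     prob_space M \<and>
     (\<forall>z\<in>gen_group R. T z \<in> M \<rightarrow>\<^sub>M M \<and> bij_betw (T z) (space M) (space M)
                       \<and> distr M M (T z) = M) \<and>
     (\<forall>\<omega>\<in>space M. T 0 \<omega> = \<omega>) \<and>
     (\<forall>x\<in>gen_group R. \<forall>y\<in>gen_group R. \<forall>\<omega>\<in>space M. T (x + y) \<omega> = T x (T y \<omega>)) \<and>
     (\<forall>x\<in>gen_group R. \<forall>y\<in>gen_group R. \<forall>\<omega>\<in>space M. T x (T y \<omega>) = T y (T x \<omega>)) \<and>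
     (\<forall>A\<in>sets M. (\<forall>z\<in>gen_group R. T z -` A \<inter> space M = A) \<longrightarrow>
                  measure M A = 0 \<or> measure M A = 1)"

definition Sshift :: "(int^'d \<Rightarrow> 'a \<Rightarrow> 'a) \<Rightarrow> int^'d \<Rightarrow> 'a \<times> (int^'d) list \<Rightarrow> 'a \<times> (int^'d) list" where
  "Sshift T z \<eta> = (case snd \<eta> of [] \<Rightarrow> (T z (fst \<eta>), [])
                                  | (z1 # zs) \<Rightarrow> (T z1 (fst \<eta>), zs @ [z]))"

fun endpt :: "(int^'d \<Rightarrow> 'a \<Rightarrow> 'a) \<Rightarrow> 'a \<times> (int^'d) list \<Rightarrow> (int^'d) list \<Rightarrow> 'a \<times> (int^'d) list" where
  "endpt T \<eta> [] = \<eta>"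
| "endpt T \<eta> (a # as) = endpt T (Sshift T a \<eta>) as"

fun pathsum :: "(int^'d \<Rightarrow> 'a \<Rightarrow> 'a) \<Rightarrow> ('a \<times> (int^'d) list \<Rightarrow> int^'d \<Rightarrow> real)
                 \<Rightarrow> 'a \<times> (int^'d) list \<Rightarrow> (int^'d) list \<Rightarrow> real" where
  "pathsum T F \<eta> [] = 0"
| "pathsum T F \<eta> (a # as) = F \<eta> a + pathsum T F (Sshift T a \<eta>) as"

definition classK :: "'a measure \<Rightarrow> (int^'d \<Rightarrow> 'a \<Rightarrow> 'a) \<Rightarrow> (int^'d) set \<Rightarrow> nat
                       \<Rightarrow> ('a \<times> (int^'d) list \<Rightarrow> int^'d \<Rightarrow> real) \<Rightarrow> bool" where
  "classK M T R l F \<longleftrightarrow>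
     (\<forall>zs z. zs \<in> lists R \<and> length zs = l \<and> z \<in> R \<longrightarrow> integrable M (\<lambda>\<omega>. F (\<omega>, zs) z)) \<and>
     (\<forall>n as. l \<le> n \<and> as \<in> lists R \<and> length as = n \<longrightarrow>
         (\<integral>\<omega>. pathsum T F (\<omega>, drop (n - l) as) as \<partial>M) = 0) \<and>
     (AE \<omega> in M. \<forall>zs as bs. zs \<in> lists R \<and> length zs = l \<and> as \<in> lists R \<and> bs \<in> lists R \<and>
         endpt T (\<omega>, zs) as = endpt T (\<omega>, zs) bs \<longrightarrow>
         pathsum T F (\<omega>, zs) as = pathsum T F (\<omega>, zs) bs)"

definition KlF :: "'a measure \<Rightarrow> (int^'d) set \<Rightarrow> nat \<Rightarrow> ('a \<times> (int^'d) list \<Rightarrow> int^'d \<Rightarrow> real)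
                   \<Rightarrow> ('a \<times> (int^'d) list \<Rightarrow> real) \<Rightarrow> ereal" where
  "KlF M R l F g = esssup M (\<lambda>\<omega>. ereal (Max ((\<lambda>zs. ln (\<Sum>z\<in>R. exp (g (\<omega>, zs) + F (\<omega>, zs) z) / real (card R)))
                                          ` {zs. zs \<in> lists R \<and> length zs = l})))"

definition underK :: "'a measure \<Rightarrow> (int^'d \<Rightarrow> 'a \<Rightarrow> 'a) \<Rightarrow> (int^'d) set \<Rightarrow> nat
                      \<Rightarrow> ('a \<times> (int^'d) list \<Rightarrow> real) \<Rightarrow> ereal" where
  "underK M T R l g = (INF F \<in> {F. classK M T R l F}. KlF M R l F g)"

end

theory Submission
  imports Defs
begin


lemma es_prob: "ergodic_system M T R \<Longrightarrow> prob_space M"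
  by (simp add: ergodic_system_def)

lemma es_T:
  assumes "ergodic_system M T R" "z \<in> gen_group R"
  shows "T z \<in> M \<rightarrow>\<^sub>M M" "distr M M (T z) = M" "inj_on (T z) (space M)"
    "\<And>\<omega>. \<omega> \<in> space M \<Longrightarrow> T z \<omega> \<in> space M"
  using assms unfolding ergodic_system_def bij_betw_def by (auto simp: measurable_space)

lemma es_comm: "ergodic_system M T R \<Longrightarrow> x \<in> gen_group R \<Longrightarrow> y \<in> gen_group R \<Longrightarrow> \<omega> \<in> space M \<Longrightarrow> T x (T y \<omega>) = T y (T x \<omega>)"
  unfolding ergodic_system_def by blast

lemma es_add: "ergodic_system M T R \<Longrightarrow> x \<in> gen_group R \<Longrightarrow> y \<in> gen_group R \<Longrightarrow> \<omega> \<in> space M \<Longrightarrow> T (x + y) \<omega> = T x (T y \<omega>)"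
  unfolding ergodic_system_def by blast

lemma es_zero: "ergodic_system M T R \<Longrightarrow> \<omega> \<in> space M \<Longrightarrow> T 0 \<omega> = \<omega>"
  unfolding ergodic_system_def by blast

lemma R_sub_G: "R \<subseteq> gen_group R" by (auto intro: gen_group.gg_base)

lemma countable_G: "countable (gen_group (R :: (int^'d) set))"
  by (rule countable_subset[OF subset_UNIV]) simp



definition wof :: "'z \<Rightarrow> 'z list \<Rightarrow> 'z" where
  "wof a zs = (case zs of [] \<Rightarrow> a | z1 # _ \<Rightarrow> z1)"
definition lsh :: "'z \<Rightarrow> 'z list \<Rightarrow> 'z list" where
  "lsh a zs = (case zs of [] \<Rightarrow> [] | _ # t \<Rightarrow> t @ [a])"

fun msum :: "('z list \<Rightarrow> 'z \<Rightarrow> real) \<Rightarrow> 'z list \<Rightarrow> 'z list \<Rightarrow> real" where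
  "msum m zs [] = 0"
| "msum m zs (a # as) = m zs a + msum m (lsh a zs) as"

lemma Sshift_eq: "Sshift T a (\<omega>, zs) = (T (wof a zs) \<omega>, lsh a zs)"
  by (cases zs) (auto simp: Sshift_def wof_def lsh_def)

lemma wof_R: "zs \<in> lists R \<Longrightarrow> a \<in> R \<Longrightarrow> wof a zs \<in> R"
  by (cases zs) (auto simp: wof_def)

lemma lsh_R: "zs \<in> lists R \<Longrightarrow> a \<in> R \<Longrightarrow> lsh a zs \<in> lists R"
  by (cases zs) (auto simp: lsh_def)

lemma lsh_len[simp]: "length (lsh a zs) = length zs"
  by (cases zs) (auto simp: lsh_def)

lemma pathsum_Cons: "pathsum T F (\<omega>, zs) (a # as) = F (\<omega>, zs) a + pathsum T F (T (wof a zs) \<omega>, lsh a zs) as"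
  by (simp add: Sshift_eq)

lemma endpt_Cons: "endpt T (\<omega>, zs) (a # as) = endpt T (T (wof a zs) \<omega>, lsh a zs) as"
  by (simp add: Sshift_eq)

lemma pathsum_sum:
  "pathsum T (\<lambda>\<eta> z. \<Sum>k\<in>S. c k * F k \<eta> z) \<eta> as = (\<Sum>k\<in>S. c k * pathsum T (F k) \<eta> as)"
  by (induction as arbitrary: \<eta>) (auto simp: sum.distrib algebra_simps sum_distrib_left)

lemma pathsum_diff:
  "pathsum T (\<lambda>\<eta> z. F \<eta> z - H \<eta> z) \<eta> as = pathsum T F \<eta> as - pathsum T H \<eta> as"
  by (induction as arbitrary: \<eta>) auto

lemma pathsum_det: "pathsum T (\<lambda>\<eta> z. D (snd \<eta>) z) (\<omega>, zs) as = msum D zs as"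
  by (induction as arbitrary: \<omega> zs) (auto simp: Sshift_eq)

lemma endpt_snd: "snd (endpt T (\<omega>, zs) as) = snd (endpt T (\<omega>', zs) as)"
  by (induction as arbitrary: \<omega> \<omega>' zs) (auto simp: Sshift_eq)

lemma endpt_space:
  assumes "ergodic_system M T R" "\<omega> \<in> space M" "zs \<in> lists R" "as \<in> lists R"
  shows "fst (endpt T (\<omega>, zs) as) \<in> space M"
  using assms(2-)
proof (induction as arbitrary: \<omega> zs)
  case (Cons a as)
  have w: "wof a zs \<in> gen_group R" using R_sub_G wof_R[OF Cons.prems(2)] Cons.prems(3) by auto
  have "T (wof a zs) \<omega> \<in> space M" using es_T(4)[OF assms(1) w Cons.prems(1)] .
  moreover have "lsh a zs \<in> lists R" using lsh_R[OF Cons.prems(2)] Cons.prems(3) by auto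
  ultimately show ?case using Cons.IH Cons.prems(3) by (simp add: Sshift_eq)
qed simp

lemma endpt_T:
  assumes es: "ergodic_system M T R" and "\<omega> \<in> space M" "zs \<in> lists R" "as \<in> lists R" and z: "z \<in> gen_group R"
  shows "endpt T (T z \<omega>, zs) as = (T z (fst (endpt T (\<omega>, zs) as)), snd (endpt T (\<omega>, zs) as))"
  using assms(2-4)
proof (induction as arbitrary: \<omega> zs)
  case Nil then show ?case by simp
next
  case (Cons a as)
  have w: "wof a zs \<in> gen_group R" using R_sub_G wof_R[OF Cons.prems(2)] Cons.prems(3) by auto
  have "T (wof a zs) (T z \<omega>) = T z (T (wof a zs) \<omega>)"
    using es_comm[OF es w z Cons.prems(1)] .
  moreover have "T (wof a zs) \<omega> \<in> space M" using es_T(4)[OF es w Cons.prems(1)] .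
  moreover have "lsh a zs \<in> lists R" using lsh_R[OF Cons.prems(2)] Cons.prems(3) by auto
  ultimately show ?case using Cons.IH Cons.prems(3) by (simp add: Sshift_eq)
qed



lemma AE_pres:
  assumes f: "f \<in> M \<rightarrow>\<^sub>M M" and d: "distr M M f = M" and P: "AE x in M. P x"
  shows "AE x in M. P (f x)"
proof -
  from P obtain N where N: "{x\<in>space M. \<not> P x} \<subseteq> N" "emeasure M N = 0" "N \<in> sets M"
    by (auto elim: AE_E)
  have "emeasure M (f -` N \<inter> space M) = emeasure (distr M M f) N"
    using emeasure_distr[OF f N(3)] by simp
  also have "\<dots> = 0" using d N(2) by simp
  finally have "f -` N \<inter> space M \<in> null_sets M" using f N(3) by auto
  moreover have "{x\<in>space M. \<not> P (f x)} \<subseteq> f -` N \<inter> space M"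
    using N(1) measurable_space[OF f] by auto
  ultimately show ?thesis by (rule AE_I')
qed

lemma path_mean:
  assumes es: "ergodic_system M T R"
    and H: "\<And>zs z. zs \<in> lists R \<Longrightarrow> length zs = l \<Longrightarrow> z \<in> R \<Longrightarrow> integrable M (\<lambda>\<omega>. H (\<omega>, zs) z)"
  shows "as \<in> lists R \<Longrightarrow> zs \<in> lists R \<Longrightarrow> length zs = l \<Longrightarrow>
     integrable M (\<lambda>\<omega>. pathsum T H (\<omega>, zs) as) \<and>
     (\<integral>\<omega>. pathsum T H (\<omega>, zs) as \<partial>M) = msum (\<lambda>zs z. \<integral>\<omega>. H (\<omega>, zs) z \<partial>M) zs as"
proof (induction as arbitrary: zs)
  case Nil then show ?case by simp
next
  case (Cons a as)
  have a: "a \<in> R" and as: "as \<in> lists R" using Cons.prems by auto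
  have w: "wof a zs \<in> gen_group R" using R_sub_G wof_R[OF Cons.prems(2) a] by auto
  have ls: "lsh a zs \<in> lists R" "length (lsh a zs) = l" using lsh_R[OF Cons.prems(2) a] Cons.prems(3) by auto
  define f where "f = (\<lambda>\<omega>. pathsum T H (\<omega>, lsh a zs) as)"
  from Cons.IH[OF as ls] have fi: "integrable M f" and fI: "integral\<^sup>L M f = msum (\<lambda>zs z. \<integral>\<omega>. H (\<omega>, zs) z \<partial>M) (lsh a zs) as"
    unfolding f_def by auto
  have Tm: "T (wof a zs) \<in> M \<rightarrow>\<^sub>M M" and Td: "distr M M (T (wof a zs)) = M" using es_T[OF es w] by auto
  have fm: "f \<in> borel_measurable M" using fi by auto
  have i2: "integrable M (\<lambda>\<omega>. f (T (wof a zs) \<omega>))"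
    using integrable_distr_eq[OF Tm fm] fi Td by simp
  have I2: "(\<integral>\<omega>. f (T (wof a zs) \<omega>) \<partial>M) = integral\<^sup>L M f"
    using integral_distr[OF Tm fm] Td by simp
  have h: "integrable M (\<lambda>\<omega>. H (\<omega>, zs) a)" using H[OF Cons.prems(2,3) a] .
  have eq: "(\<lambda>\<omega>. pathsum T H (\<omega>, zs) (a # as)) = (\<lambda>\<omega>. H (\<omega>, zs) a + f (T (wof a zs) \<omega>))"
    unfolding f_def by (simp add: Sshift_eq)
  show ?case unfolding eq using h i2 I2 fI by simp
qed

lemma pathsum_conv:
  assumes es: "ergodic_system M T R" and fR: "finite R"
    and conv: "AE \<omega> in M. \<forall>zs z. zs \<in> lists R \<and> length zs = l \<and> z \<in> R \<longrightarrow> (\<lambda>j. Fs j (\<omega>, zs) z) \<longlonglongrightarrow> H (\<omega>, zs) z"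
  shows "as \<in> lists R \<Longrightarrow> AE \<omega> in M. \<forall>zs. zs \<in> lists R \<and> length zs = l \<longrightarrow>
      (\<lambda>j. pathsum T (Fs j) (\<omega>, zs) as) \<longlonglongrightarrow> pathsum T H (\<omega>, zs) as"
proof (induction as)
  case Nil then show ?case by simp
next
  case (Cons a as)
  have a: "a \<in> R" and as: "as \<in> lists R" using Cons.prems by auto
  have "AE \<omega> in M. \<forall>w\<in>R. \<forall>zs. zs \<in> lists R \<and> length zs = l \<longrightarrow>
      (\<lambda>j. pathsum T (Fs j) (T w \<omega>, zs) as) \<longlonglongrightarrow> pathsum T H (T w \<omega>, zs) as"
  proof (rule AE_finite_allI[OF fR])
    fix w assume "w \<in> R"
    then have w: "w \<in> gen_group R" using R_sub_G by auto
    show "AE \<omega> in M. \<forall>zs. zs \<in> lists R \<and> length zs = l \<longrightarrow>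
      (\<lambda>j. pathsum T (Fs j) (T w \<omega>, zs) as) \<longlonglongrightarrow> pathsum T H (T w \<omega>, zs) as"
      using AE_pres[OF es_T(1,2)[OF es w] Cons.IH[OF as]] .
  qed
  then show ?case using conv
  proof eventually_elim
    case (elim \<omega>)
    show ?case
    proof (intro allI impI)
      fix zs assume zs: "zs \<in> lists R \<and> length zs = l"
      have "wof a zs \<in> R" using wof_R[of zs R a] zs a by auto
      moreover have "lsh a zs \<in> lists R \<and> length (lsh a zs) = l" using lsh_R[of zs R a] zs a by auto
      ultimately have t1: "(\<lambda>j. pathsum T (Fs j) (T (wof a zs) \<omega>, lsh a zs) as) \<longlonglongrightarrow> pathsum T H (T (wof a zs) \<omega>, lsh a zs) as"
        using elim(1) by blast
      have t2: "(\<lambda>j. Fs j (\<omega>, zs) a) \<longlonglongrightarrow> H (\<omega>, zs) a" using elim(2) zs a by blast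
      show "(\<lambda>j. pathsum T (Fs j) (\<omega>, zs) (a # as)) \<longlonglongrightarrow> pathsum T H (\<omega>, zs) (a # as)"
        unfolding pathsum_Cons using tendsto_add[OF t2 t1] .
    qed
  qed
qed

lemma dichotomy:
  assumes es: "ergodic_system M T R"
    and inv: "\<And>z \<omega>. z \<in> gen_group R \<Longrightarrow> \<omega> \<in> space M \<Longrightarrow> (T z \<omega> \<in> S \<longleftrightarrow> \<omega> \<in> S)"
    and Dm: "\<Delta> \<in> borel_measurable M" and ae: "AE \<omega> in M. \<omega> \<in> S \<longrightarrow> \<Delta> \<omega> = 0"
  shows "(AE \<omega> in M. \<omega> \<notin> S) \<or> (AE \<omega> in M. \<Delta> \<omega> = (0::real))"
proof -
  interpret prob_space M using es_prob[OF es] .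
  from ae obtain N where N: "{\<omega>\<in>space M. \<not> (\<omega> \<in> S \<longrightarrow> \<Delta> \<omega> = 0)} \<subseteq> N" "emeasure M N = 0" "N \<in> sets M"
    by (auto elim: AE_E)
  define Z where "Z = {\<omega>\<in>space M. \<Delta> \<omega> = 0} \<union> N"
  have Zs: "Z \<in> sets M" unfolding Z_def using Dm N(3) by measurable
  define H where "H = (\<Inter>z\<in>gen_group R. T z -` Z \<inter> space M)"
  have HZ: "H \<subseteq> Z" unfolding H_def using es_zero[OF es] gen_group.gg_zero[of R]
    by auto
  have Hs: "H \<in> sets M" unfolding H_def
    by (rule sets.countable_INT'[OF countable_G]) (auto intro: gen_group.gg_zero measurable_sets[OF es_T(1)[OF es] Zs])
  have Hsp: "H \<subseteq> space M" unfolding H_def using gen_group.gg_zero[of R] by auto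
  have Hinv: "\<forall>w\<in>gen_group R. T w -` H \<inter> space M = H"
  proof
    fix w assume w: "w \<in> gen_group R"
    show "T w -` H \<inter> space M = H"
    proof (intro equalityI subsetI)
      fix x assume x: "x \<in> T w -` H \<inter> space M"
      show "x \<in> H" unfolding H_def
      proof (rule INT_I)
        fix z assume z: "z \<in> gen_group R"
        have z': "z + - w \<in> gen_group R" using z w by (intro gen_group.gg_add gen_group.gg_neg)
        have "T w x \<in> H" using x by auto
        then have "T (z + - w) (T w x) \<in> Z" using z' unfolding H_def by blast
        moreover have "T (z + - w) (T w x) = T z x"
          using es_add[OF es z' w, of x] x by simp
        ultimately show "x \<in> T z -` Z \<inter> space M" using x by simp
      qed
    next
      fix x assume x: "x \<in> H"
      have xs: "x \<in> space M" using x Hsp by auto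
      have "T w x \<in> H" unfolding H_def
      proof (rule INT_I)
        fix z assume z: "z \<in> gen_group R"
        have "z + w \<in> gen_group R" using z w by (auto intro: gen_group.intros)
        then have "T (z + w) x \<in> Z" using x unfolding H_def by blast
        then show "T w x \<in> T z -` Z \<inter> space M" using es_add[OF es z w xs] es_T(4)[OF es w xs] by simp
      qed
      then show "x \<in> T w -` H \<inter> space M" using xs by auto
    qed
  qed
  have SH: "S \<inter> space M \<subseteq> H"
  proof
    fix x assume x: "x \<in> S \<inter> space M"
    show "x \<in> H" unfolding H_def
    proof (rule INT_I)
      fix z assume z: "z \<in> gen_group R"
      have sp: "T z x \<in> space M" using es_T(4)[OF es z] x by auto
      have "T z x \<in> S" using inv[OF z] x by auto
      then have "T z x \<in> Z" unfolding Z_def using N(1) sp by auto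
      then show "x \<in> T z -` Z \<inter> space M" using x by auto
    qed
  qed
  have "measure M H = 0 \<or> measure M H = 1" using es Hs Hinv unfolding ergodic_system_def by blast
  then show ?thesis
  proof
    assume "measure M H = 0"
    then have "H \<in> null_sets M" using Hs by (simp add: emeasure_eq_measure null_sets_def)
    then have "AE \<omega> in M. \<omega> \<notin> H" by (rule AE_not_in)
    with AE_space have "AE \<omega> in M. \<omega> \<notin> S" by eventually_elim (use SH in auto)
    then show ?thesis ..
  next
    assume "measure M H = 1"
    then have "AE \<omega> in M. \<omega> \<in> H" using AE_in_set_eq_1[OF Hs] by simp
    moreover have "AE \<omega> in M. \<omega> \<notin> N" using N by (intro AE_not_in) auto
    ultimately have "AE \<omega> in M. \<Delta> \<omega> = 0"
      by eventually_elim (use HZ Z_def in auto)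
    then show ?thesis ..
  qed
qed



definition ctail :: "nat \<Rightarrow> (nat \<Rightarrow> real) \<Rightarrow> bool" where
  "ctail n L \<longleftrightarrow> finite {k. L k \<noteq> 0} \<and> (\<forall>k. 0 \<le> L k) \<and> (\<forall>k<n. L k = 0) \<and> sum L {k. L k \<noteq> 0} = 1"

definition cc :: "(nat \<Rightarrow> real) \<Rightarrow> (nat \<Rightarrow> real) \<Rightarrow> real" where
  "cc L x = (\<Sum>k\<in>{k. L k \<noteq> 0}. L k * x k)"

lemma cc_super: "finite S \<Longrightarrow> {k. L k \<noteq> 0} \<subseteq> S \<Longrightarrow> cc L x = (\<Sum>k\<in>S. L k * x k)"
  unfolding cc_def by (rule sum.mono_neutral_left) auto

lemma ctail_sum_super: "ctail n L \<Longrightarrow> finite S \<Longrightarrow> {k. L k \<noteq> 0} \<subseteq> S \<Longrightarrow> sum L S = 1"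
proof -
  assume a: "ctail n L" "finite S" "{k. L k \<noteq> 0} \<subseteq> S"
  have "sum L {k. L k \<noteq> 0} = sum L S" by (rule sum.mono_neutral_left) (use a in auto)
  then show ?thesis using a(1) unfolding ctail_def by simp
qed

lemma ctail_mono: "ctail n L \<Longrightarrow> m \<le> n \<Longrightarrow> ctail m L"
  unfolding ctail_def by auto

lemma ctail_point: "ctail n (\<lambda>k. if k = n then 1 else 0)"
  unfolding ctail_def by auto

lemma cc_point: "cc (\<lambda>k. if k = n then 1 else 0) x = x n"
  unfolding cc_def by simp

lemma supp_mid: "ctail n L \<Longrightarrow> ctail n L' \<Longrightarrow> {k. (L k + L' k) / 2 \<noteq> 0} = {k. L k \<noteq> 0} \<union> {k. L' k \<noteq> 0}"
  unfolding ctail_def by (auto simp: add_nonneg_eq_0_iff)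

lemma ctail_mid:
  assumes "ctail n L" "ctail n L'"
  shows "ctail n (\<lambda>k. (L k + L' k) / 2)"
proof -
  let ?S = "{k. L k \<noteq> 0} \<union> {k. L' k \<noteq> 0}"
  have f: "finite ?S" using assms unfolding ctail_def by auto
  have "sum L ?S = 1" "sum L' ?S = 1" using ctail_sum_super[OF assms(1) f] ctail_sum_super[OF assms(2) f] by auto
  then have "sum (\<lambda>k. (L k + L' k) / 2) ?S = 1" by (simp add: sum.distrib sum_divide_distrib[symmetric])
  then show ?thesis using assms f supp_mid[OF assms] unfolding ctail_def by auto
qed

lemma cc_mid:
  assumes "ctail n L" "ctail n L'"
  shows "cc (\<lambda>k. (L k + L' k) / 2) x = (cc L x + cc L' x) / 2"
proof -
  let ?S = "{k. L k \<noteq> 0} \<union> {k. L' k \<noteq> 0}"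
  have f: "finite ?S" using assms unfolding ctail_def by auto
  show ?thesis
    using cc_super[OF f, of L x] cc_super[OF f, of L' x] cc_super[OF f, of "\<lambda>k. (L k + L' k) / 2" x] supp_mid[OF assms]
    by (simp add: sum.distrib sum_divide_distrib[symmetric] algebra_simps)
qed

lemma cc_lin: "cc L (\<lambda>k. a * x k + b * y k) = a * cc L x + b * cc L y"
  unfolding cc_def by (simp add: sum.distrib sum_distrib_left algebra_simps)

lemma cc_add: "cc L (\<lambda>k. x k + y k) = cc L x + cc L y"
  unfolding cc_def by (simp add: sum.distrib algebra_simps)

lemma cc_diff: "cc L (\<lambda>k. x k - y k) = cc L x - cc L y"
  unfolding cc_def by (simp add: sum_subtractf algebra_simps)

lemma cc_const: "ctail n L \<Longrightarrow> cc L (\<lambda>k. c) = c"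
  unfolding cc_def ctail_def by (simp add: sum_distrib_right[symmetric])

lemma cc_sum: "cc L (\<lambda>k. \<Sum>i\<in>A. x k i) = (\<Sum>i\<in>A. cc L (\<lambda>k. x k i))"
  unfolding cc_def by (simp add: sum_distrib_left sum.swap[of _ A])

lemma cc_le: "ctail n L \<Longrightarrow> (\<And>k. n \<le> k \<Longrightarrow> x k \<le> y k) \<Longrightarrow> cc L x \<le> cc L y"
  unfolding cc_def ctail_def
  by (intro sum_mono mult_left_mono) (auto, meson not_le)

lemma cc_bound:
  assumes "ctail n L" "\<And>k. n \<le> k \<Longrightarrow> \<bar>x k - c\<bar> \<le> e"
  shows "\<bar>cc L x - c\<bar> \<le> e"
proof -
  have "cc L x - c = cc L (\<lambda>k. x k - c)" using cc_diff[of L x "\<lambda>k. c"] cc_const[OF assms(1)] by simp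
  also have "\<dots> \<le> cc L (\<lambda>k. e)" using assms by (intro cc_le) (auto simp: abs_le_iff)
  finally have 1: "cc L x - c \<le> e" using cc_const[OF assms(1)] by simp
  have "c - cc L x = cc L (\<lambda>k. c - x k)" using cc_diff[of L "\<lambda>k. c" x] cc_const[OF assms(1)] by simp
  also have "\<dots> \<le> cc L (\<lambda>k. e)" using assms by (intro cc_le) (auto simp: abs_le_iff)
  finally have 2: "c - cc L x \<le> e" using cc_const[OF assms(1)] by simp
  from 1 2 show ?thesis by auto
qed

lemma cc_tendsto:
  assumes "\<And>j. ctail j (L j)" "x \<longlonglongrightarrow> c"
  shows "(\<lambda>j. cc (L j) x) \<longlonglongrightarrow> c"
proof (rule LIMSEQ_I)
  fix r :: real assume r: "0 < r"
  from LIMSEQ_D[OF assms(2) half_gt_zero[OF r]] obtain N where N: "\<And>n. n \<ge> N \<Longrightarrow> norm (x n - c) < r / 2" by blast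
  show "\<exists>N. \<forall>n\<ge>N. norm (cc (L n) x - c) < r"
  proof (intro exI allI impI)
    fix n assume "n \<ge> N"
    then have "\<bar>cc (L n) x - c\<bar> \<le> r / 2" using N by (intro cc_bound[OF assms(1)]) (auto intro: less_imp_le)
    then show "norm (cc (L n) x - c) < r" using r by simp
  qed
qed

lemma cc_exp: "ctail n L \<Longrightarrow> exp (cc L x) \<le> cc L (\<lambda>k. exp (x k))"
proof -
  assume a: "ctail n L"
  let ?S = "{k. L k \<noteq> 0}"
  have "?S \<noteq> {}"
  proof
    assume "?S = {}" then have "sum L ?S = 0" by simp
    then show False using a unfolding ctail_def by simp
  qed
  then have "exp (\<Sum>k\<in>?S. L k *\<^sub>R x k) \<le> (\<Sum>k\<in>?S. L k * exp (x k))"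
    using a unfolding ctail_def by (intro convex_on_sum[OF _ _ exp_convex]) auto
  then show ?thesis unfolding cc_def by simp
qed

lemma finite_subseq:
  fixes P :: "'i \<Rightarrow> (nat \<Rightarrow> nat) \<Rightarrow> bool"
  assumes "finite I"
    and ext: "\<And>i (r::nat\<Rightarrow>nat). i \<in> I \<Longrightarrow> strict_mono r \<Longrightarrow> \<exists>r'. strict_mono r' \<and> P i (r \<circ> r')"
    and sub: "\<And>i (r::nat\<Rightarrow>nat) (r'::nat\<Rightarrow>nat). i \<in> I \<Longrightarrow> P i r \<Longrightarrow> strict_mono r' \<Longrightarrow> P i (r \<circ> r')"
  shows "\<exists>r::nat\<Rightarrow>nat. strict_mono r \<and> (\<forall>i\<in>I. P i r)"
  using assms(1) ext sub
proof (induction I rule: finite_induct)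
  case empty
  have "strict_mono (id :: nat \<Rightarrow> nat)" by (simp add: strict_mono_def)
  then show ?case by blast
next
  case (insert x F)
  from insert.IH insert.prems obtain r where r: "strict_mono r" "\<forall>i\<in>F. P i r" by blast
  from insert.prems(1)[of x r] r(1) obtain r' where r': "strict_mono r'" "P x (r \<circ> r')" by blast
  have "\<forall>i\<in>F. P i (r \<circ> r')" using insert.prems(2) r r'(1) by blast
  moreover have "strict_mono (r \<circ> r')" using r' r(1) by (rule_tac strict_mono_o) auto
  ultimately show ?case using r'(2) by blast
qed



lemma cc_measurable[measurable]:
  assumes "\<And>k. f k \<in> borel_measurable M"
  shows "(\<lambda>\<omega>. cc L (\<lambda>k. f k \<omega>)) \<in> borel_measurable M"
  unfolding cc_def using assms by measurable

lemma cc_nonneg: "ctail n L \<Longrightarrow> (\<And>k. 0 \<le> x k) \<Longrightarrow> 0 \<le> cc L x"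
  unfolding cc_def ctail_def by (intro sum_nonneg) auto

lemma sq_identity:
  fixes a b :: real
  shows "(exp (- a / 2) - exp (- b / 2))\<^sup>2 = exp (- a) + exp (- b) - 2 * exp (- ((a + b) / 2))"
proof -
  have "exp (- a / 2) ^ 2 = exp (- a)" by (simp add: power2_eq_square exp_add[symmetric])
  moreover have "exp (- b / 2) ^ 2 = exp (- b)" by (simp add: power2_eq_square exp_add[symmetric])
  moreover have "exp (- a / 2) * exp (- b / 2) = exp (- ((a + b) / 2))" by (simp add: exp_add[symmetric] field_simps)
  ultimately show ?thesis by (simp add: power2_diff)
qed

lemma abs_le_sq: "0 < (d::real) \<Longrightarrow> \<bar>x\<bar> \<le> d + x\<^sup>2 / d"
proof -
  assume d: "0 < d"
  show ?thesis
  proof (cases "\<bar>x\<bar> \<le> d")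
    case True then show ?thesis using d by (simp add: add_increasing2)
  next
    case False
    then have "\<bar>x\<bar> * d \<le> \<bar>x\<bar> * \<bar>x\<bar>" using d by (intro mult_left_mono) auto
    then have "\<bar>x\<bar> \<le> x\<^sup>2 / d" using d by (simp add: field_simps power2_eq_square)
    then show ?thesis using d by simp
  qed
qed

lemma DS:
  fixes u :: "nat \<Rightarrow> 'i \<Rightarrow> 'a \<Rightarrow> real"
  assumes P: "prob_space M" and fI: "finite I"
    and um: "\<And>k i. i \<in> I \<Longrightarrow> u k i \<in> borel_measurable M" and un: "\<And>k i \<omega>. 0 \<le> u k i \<omega>"
  shows "\<exists>L. (\<forall>n. ctail n (L n)) \<and> (\<forall>i\<in>I. \<forall>e>0. \<exists>N. \<forall>p\<ge>N. \<forall>q\<ge>N.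
     (\<integral>\<omega>. \<bar>exp (- cc (L p) (\<lambda>k. u k i \<omega>) / 2) - exp (- cc (L q) (\<lambda>k. u k i \<omega>) / 2)\<bar> \<partial>M) < e)"
proof -
  interpret prob_space M by fact
  define V where "V L i \<omega> = cc L (\<lambda>k. u k i \<omega>)" for L i \<omega>
  have Vm[measurable]: "(\<lambda>\<omega>. V L i \<omega>) \<in> borel_measurable M" if "i \<in> I" for L i
    unfolding V_def using um[OF that] by measurable
  have Vn: "0 \<le> V L i \<omega>" if "ctail n L" for n L i \<omega>
    unfolding V_def using cc_nonneg[OF that] un by auto
  have int1: "integrable M (\<lambda>\<omega>. exp (- V L i \<omega>))" if "ctail n L" "i \<in> I" for n L i
    by (rule integrable_const_bound[where B=1]) (use Vn[OF that(1)] that(2) in auto)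
  have int2: "integrable M (\<lambda>\<omega>. exp (- V L i \<omega> / 2))" if "ctail n L" "i \<in> I" for n L i
    by (rule integrable_const_bound[where B=1]) (use Vn[OF that(1)] that(2) in auto)
  define Psi where "Psi L = (\<Sum>i\<in>I. \<integral>\<omega>. exp (- V L i \<omega>) \<partial>M)" for L
  have Psi0: "0 \<le> Psi L" for L unfolding Psi_def by (intro sum_nonneg integral_nonneg_AE) auto
  have Psi1: "Psi L \<le> card I" if "ctail n L" for n L
  proof -
    have "Psi L \<le> (\<Sum>i\<in>I. 1)" unfolding Psi_def
    proof (rule sum_mono)
      fix i assume i: "i \<in> I"
      have "(\<integral>\<omega>. exp (- V L i \<omega>) \<partial>M) \<le> (\<integral>\<omega>. 1 \<partial>M)"
        by (rule integral_mono[OF int1[OF that i]]) (use Vn[OF that] in auto)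
      then show "(\<integral>\<omega>. exp (- V L i \<omega>) \<partial>M) \<le> 1" by (simp add: prob_space)
    qed
    then show ?thesis by simp
  qed
  define dd where "dd n = Inf (Psi ` {L. ctail n L})" for n
  have ne: "Psi ` {L. ctail n L} \<noteq> {}" for n using ctail_point[of n] by auto
  have bb: "bdd_below (Psi ` {L. ctail n L})" for n unfolding bdd_below_def using Psi0 by blast
  have dd_le: "dd n \<le> Psi L" if "ctail n L" for n L
    unfolding dd_def by (rule cInf_lower) (use that bb in auto)
  have dd_mono: "dd n \<le> dd (Suc n)" for n
    unfolding dd_def
  proof (rule cInf_superset_mono[OF ne bb])
    show "Psi ` {L. ctail (Suc n) L} \<subseteq> Psi ` {L. ctail n L}" using ctail_mono[of "Suc n" _ n] by auto
  qed
  have dd_card: "dd n \<le> card I" for n using dd_le[OF ctail_point[of n]] Psi1[OF ctail_point[of n]] by simp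
  have inc: "incseq dd" using dd_mono by (simp add: incseq_SucI)
  have bda: "bdd_above (range dd)" unfolding bdd_above_def using dd_card by blast
  define Dl where "Dl = (SUP n. dd n)"
  have ddlim: "dd \<longlonglongrightarrow> Dl" unfolding Dl_def by (rule LIMSEQ_incseq_SUP[OF bda inc])
  have ddDl: "dd n \<le> Dl" for n unfolding Dl_def by (rule cSUP_upper[OF UNIV_I bda])
  have "\<forall>n. \<exists>L. ctail n L \<and> Psi L < dd n + 1 / (Suc n)"
  proof
    fix n
    have "Inf (Psi ` {L. ctail n L}) < dd n + 1 / Suc n" unfolding dd_def by simp
    from cInf_lessD[OF ne this] show "\<exists>L. ctail n L \<and> Psi L < dd n + 1 / (Suc n)" by auto
  qed
  then obtain Ls where Ls: "\<And>n. ctail n (Ls n)" "\<And>n. Psi (Ls n) < dd n + 1 / (Suc n)" by metis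
  define W where "W p i \<omega> = exp (- V (Ls p) i \<omega> / 2)" for p i \<omega>
  have key: "(\<integral>\<omega>. (W p i \<omega> - W q i \<omega>)\<^sup>2 \<partial>M) \<le> 2 * (Dl - dd n) + 2 / Suc n"
    if pq: "n \<le> p" "n \<le> q" and i: "i \<in> I" for n p q i
  proof -
    have cp: "ctail n (Ls p)" "ctail n (Ls q)" using Ls(1) pq ctail_mono by auto
    define Mi where "Mi = (\<lambda>k. (Ls p k + Ls q k) / 2)"
    have cm: "ctail n Mi" unfolding Mi_def by (rule ctail_mid[OF cp])
    have Vmid: "V Mi j \<omega> = (V (Ls p) j \<omega> + V (Ls q) j \<omega>) / 2" for j \<omega>
      unfolding V_def Mi_def by (rule cc_mid[OF cp])
    have pt: "(W p j \<omega> - W q j \<omega>)\<^sup>2 = exp (- V (Ls p) j \<omega>) + exp (- V (Ls q) j \<omega>) - 2 * exp (- V Mi j \<omega>)" for j \<omega>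
      unfolding W_def Vmid by (rule sq_identity)
    have intj: "(\<integral>\<omega>. (W p j \<omega> - W q j \<omega>)\<^sup>2 \<partial>M) =
      (\<integral>\<omega>. exp (- V (Ls p) j \<omega>) \<partial>M) + (\<integral>\<omega>. exp (- V (Ls q) j \<omega>) \<partial>M) - 2 * (\<integral>\<omega>. exp (- V Mi j \<omega>) \<partial>M)"
      if j: "j \<in> I" for j
      unfolding pt using int1[OF cp(1) j] int1[OF cp(2) j] int1[OF cm j]
      by (simp add: Bochner_Integration.integral_diff Bochner_Integration.integral_add)
    have "(\<Sum>j\<in>I. \<integral>\<omega>. (W p j \<omega> - W q j \<omega>)\<^sup>2 \<partial>M) = (\<Sum>j\<in>I.
      (\<integral>\<omega>. exp (- V (Ls p) j \<omega>) \<partial>M) + (\<integral>\<omega>. exp (- V (Ls q) j \<omega>) \<partial>M) - 2 * (\<integral>\<omega>. exp (- V Mi j \<omega>) \<partial>M))"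
      by (rule sum.cong[OF refl intj])
    then have sumeq: "(\<Sum>j\<in>I. \<integral>\<omega>. (W p j \<omega> - W q j \<omega>)\<^sup>2 \<partial>M) = Psi (Ls p) + Psi (Ls q) - 2 * Psi Mi"
      unfolding Psi_def by (simp add: sum.distrib sum_subtractf sum_distrib_left)
    have "(\<integral>\<omega>. (W p i \<omega> - W q i \<omega>)\<^sup>2 \<partial>M) \<le> (\<Sum>j\<in>I. \<integral>\<omega>. (W p j \<omega> - W q j \<omega>)\<^sup>2 \<partial>M)"
      by (rule member_le_sum[OF i _ fI]) (auto intro!: integral_nonneg_AE)
    also have "\<dots> \<le> (dd p + 1 / Suc p) + (dd q + 1 / Suc q) - 2 * dd n"
      unfolding sumeq using Ls(2)[of p] Ls(2)[of q] dd_le[OF cm] by linarith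
    also have "\<dots> \<le> (Dl + 1 / Suc n) + (Dl + 1 / Suc n) - 2 * dd n"
    proof -
      have "1 / real (Suc p) \<le> 1 / real (Suc n)" "1 / real (Suc q) \<le> 1 / real (Suc n)"
        using pq by (auto simp: divide_simps)
      then show ?thesis using ddDl[of p] ddDl[of q] by linarith
    qed
    finally show ?thesis by simp
  qed
  have L1: "\<forall>e>0. \<exists>N. \<forall>p\<ge>N. \<forall>q\<ge>N. (\<integral>\<omega>. \<bar>W p i \<omega> - W q i \<omega>\<bar> \<partial>M) < e" if i: "i \<in> I" for i
  proof (intro allI impI)
    fix e :: real assume e: "0 < e"
    define t where "t = e\<^sup>2 / 16"
    have t: "0 < t" using e unfolding t_def by simp
    have "eventually (\<lambda>n. Dl - t < dd n) sequentially"
      using order_tendstoD(1)[OF ddlim, of "Dl - t"] t by simp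
    then have ev1: "eventually (\<lambda>n. Dl - dd n < t) sequentially"
      by (rule eventually_mono) auto
    have ev2: "eventually (\<lambda>n. 1 / Suc n < t) sequentially"
      using order_tendstoD(2)[OF LIMSEQ_inverse_real_of_nat t] by (simp add: inverse_eq_divide)
    from eventually_conj[OF ev1 ev2] obtain n where n: "Dl - dd n < t" "1 / Suc n < t"
      by (auto simp: eventually_sequentially)
    show "\<exists>N. \<forall>p\<ge>N. \<forall>q\<ge>N. (\<integral>\<omega>. \<bar>W p i \<omega> - W q i \<omega>\<bar> \<partial>M) < e"
    proof (intro exI allI impI)
      fix p q assume pq: "n \<le> p" "n \<le> q"
      have cp: "ctail n (Ls p)" "ctail n (Ls q)" using Ls(1) pq ctail_mono by auto
      have iW: "integrable M (\<lambda>\<omega>. W p i \<omega> - W q i \<omega>)"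
        unfolding W_def using int2[OF cp(1) i] int2[OF cp(2) i] by simp
      have m1[measurable]: "(\<lambda>\<omega>. W p i \<omega> - W q i \<omega>) \<in> borel_measurable M" using iW by auto
      have bnd: "(W p i \<omega> - W q i \<omega>)\<^sup>2 \<le> 1" for \<omega>
      proof -
        have "0 \<le> V (Ls p) i \<omega>" "0 \<le> V (Ls q) i \<omega>" using Vn[OF cp(1)] Vn[OF cp(2)] by auto
        then have "exp (- V (Ls p) i \<omega> / 2) \<le> 1" "exp (- V (Ls q) i \<omega> / 2) \<le> 1" by auto
        moreover have "0 < exp (- V (Ls p) i \<omega> / 2)" "0 < exp (- V (Ls q) i \<omega> / 2)" by auto
        ultimately have "\<bar>W p i \<omega> - W q i \<omega>\<bar> \<le> 1" unfolding W_def by linarith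
        then show ?thesis by (simp add: abs_square_le_1)
      qed
      have iW2: "integrable M (\<lambda>\<omega>. (W p i \<omega> - W q i \<omega>)\<^sup>2)"
      proof (rule integrable_const_bound[where B=1])
        show "AE x in M. norm ((W p i x - W q i x)\<^sup>2) \<le> 1" using bnd by simp
        show "(\<lambda>\<omega>. (W p i \<omega> - W q i \<omega>)\<^sup>2) \<in> borel_measurable M" by measurable
      qed
      have iW3: "integrable M (\<lambda>\<omega>. e / 2 + (W p i \<omega> - W q i \<omega>)\<^sup>2 / (e / 2))"
        using iW2 by simp
      have "(\<integral>\<omega>. \<bar>W p i \<omega> - W q i \<omega>\<bar> \<partial>M) \<le> (\<integral>\<omega>. e / 2 + (W p i \<omega> - W q i \<omega>)\<^sup>2 / (e / 2) \<partial>M)"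
        by (rule integral_mono[OF _ iW3]) (use iW abs_le_sq[of "e/2"] e in auto)
      also have "\<dots> = e / 2 + (\<integral>\<omega>. (W p i \<omega> - W q i \<omega>)\<^sup>2 \<partial>M) / (e / 2)"
        using iW2 by (simp add: Bochner_Integration.integral_add prob_space)
      also have "\<dots> \<le> e / 2 + (2 * (Dl - dd n) + 2 / Suc n) / (e / 2)"
        using key[OF pq i] e by (intro add_left_mono divide_right_mono) auto
      also have "\<dots> < e / 2 + (4 * t) / (e / 2)"
        using n e by (intro add_strict_left_mono divide_strict_right_mono) auto
      also have "\<dots> = e" using e unfolding t_def by (simp add: power2_eq_square field_simps)
      finally show "(\<integral>\<omega>. \<bar>W p i \<omega> - W q i \<omega>\<bar> \<partial>M) < e" .
    qed
  qed
  show ?thesis using Ls(1) L1 unfolding W_def V_def by blast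
qed



lemma finite_Zs: "finite R \<Longrightarrow> finite {zs. zs \<in> lists R \<and> length zs = l}"
proof -
  assume "finite R"
  then have "finite {xs. set xs \<subseteq> R \<and> length xs = l}" by (rule finite_lists_length_eq)
  moreover have "{zs. zs \<in> lists R \<and> length zs = l} = {xs. set xs \<subseteq> R \<and> length xs = l}" by auto
  ultimately show ?thesis by simp
qed

lemma msum_cong:
  assumes "\<And>zs z. zs \<in> lists R \<Longrightarrow> length zs = l \<Longrightarrow> z \<in> R \<Longrightarrow> m zs z = m' zs z"
  shows "as \<in> lists R \<Longrightarrow> zs \<in> lists R \<Longrightarrow> length zs = l \<Longrightarrow> msum m zs as = msum m' zs as"
proof (induction as arbitrary: zs)
  case (Cons a as)
  then have "lsh a zs \<in> lists R" using lsh_R[of zs R a] by auto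
  then show ?case using Cons assms by auto
qed simp

lemma msum_diff: "msum (\<lambda>zs z. a zs z - b zs z) zs as = msum a zs as - msum b zs as"
  by (induction as arbitrary: zs) auto

lemma msum_tendsto:
  assumes "\<And>zs z. zs \<in> lists R \<Longrightarrow> length zs = l \<Longrightarrow> z \<in> R \<Longrightarrow> (\<lambda>k. m k zs z) \<longlonglongrightarrow> m' zs z"
  shows "as \<in> lists R \<Longrightarrow> zs \<in> lists R \<Longrightarrow> length zs = l \<Longrightarrow> (\<lambda>k. msum (m k) zs as) \<longlonglongrightarrow> msum m' zs as"
proof (induction as arbitrary: zs)
  case (Cons a as)
  then have "lsh a zs \<in> lists R" using lsh_R[of zs R a] by auto
  then have "(\<lambda>k. msum (m k) (lsh a zs) as) \<longlonglongrightarrow> msum m' (lsh a zs) as" using Cons by auto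
  moreover have "(\<lambda>k. m k zs a) \<longlonglongrightarrow> m' zs a" using Cons assms by auto
  ultimately show ?case by (simp add: tendsto_add)
qed simp

lemma msum_le:
  assumes "\<And>zs z. zs \<in> lists R \<Longrightarrow> length zs = l \<Longrightarrow> z \<in> R \<Longrightarrow> m zs z \<le> B"
  shows "as \<in> lists R \<Longrightarrow> zs \<in> lists R \<Longrightarrow> length zs = l \<Longrightarrow> msum m zs as \<le> real (length as) * B"
proof (induction as arbitrary: zs)
  case (Cons a as)
  then have "lsh a zs \<in> lists R" using lsh_R[of zs R a] by auto
  then have "msum m (lsh a zs) as \<le> real (length as) * B" using Cons by auto
  moreover have "m zs a \<le> B" using Cons assms by auto
  ultimately show ?case by (simp add: algebra_simps)
qed simp

lemma cc_abs: "ctail n L \<Longrightarrow> \<bar>cc L x - a\<bar> \<le> cc L (\<lambda>k. \<bar>x k - a\<bar>)"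
proof -
  assume c: "ctail n L"
  have "cc L x - a = cc L (\<lambda>k. x k - a)" using cc_diff[of L x "\<lambda>k. a"] cc_const[OF c] by simp
  also have "\<bar>\<dots>\<bar> \<le> cc L (\<lambda>k. \<bar>x k - a\<bar>)"
    unfolding cc_def using c unfolding ctail_def
    by (rule_tac order_trans[OF sum_abs]) (auto intro!: sum_mono simp: abs_mult)
  finally show ?thesis .
qed

lemma integral_cc:
  assumes "\<And>k. integrable M (f k)"
  shows "integrable M (\<lambda>\<omega>. cc L (\<lambda>k. f k \<omega>))" "(\<integral>\<omega>. cc L (\<lambda>k. f k \<omega>) \<partial>M) = cc L (\<lambda>k. integral\<^sup>L M (f k))"
  unfolding cc_def using assms by auto



lemma cc_divide: "cc L (\<lambda>k. x k / d) = cc L x / d"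
  unfolding cc_def by (simp add: sum_divide_distrib)

lemma convex_bound:
  assumes Lt: "ctail n L" and fR: "finite R"
    and b: "\<And>k. (\<Sum>z\<in>R. exp (a k + b k z) / d) \<le> E" and d: "0 < d"
  shows "(\<Sum>z\<in>R. exp (cc L a + cc L (\<lambda>k. b k z)) / d) \<le> E"
proof -
  have "(\<Sum>z\<in>R. exp (cc L a + cc L (\<lambda>k. b k z)) / d) \<le> (\<Sum>z\<in>R. cc L (\<lambda>k. exp (a k + b k z)) / d)"
  proof (rule sum_mono)
    fix z
    have "exp (cc L a + cc L (\<lambda>k. b k z)) = exp (cc L (\<lambda>k. a k + b k z))" by (simp add: cc_add)
    also have "\<dots> \<le> cc L (\<lambda>k. exp (a k + b k z))" by (rule cc_exp[OF Lt])
    finally show "exp (cc L a + cc L (\<lambda>k. b k z)) / d \<le> cc L (\<lambda>k. exp (a k + b k z)) / d"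
      using d by (simp add: divide_right_mono)
  qed
  also have "\<dots> = cc L (\<lambda>k. \<Sum>z\<in>R. exp (a k + b k z) / d)"
    by (simp add: cc_sum cc_divide)
  also have "\<dots> \<le> cc L (\<lambda>k. E)" by (rule cc_le[OF Lt]) (rule b)
  also have "\<dots> = E" by (rule cc_const[OF Lt])
  finally show ?thesis .
qed

lemma ptw_lim:
  fixes U :: "nat \<Rightarrow> real"
  assumes U0: "\<And>n. 0 \<le> U n" and Ca: "Cauchy (\<lambda>n. exp (- U n / 2))"
    and fin: "liminf (\<lambda>n. ennreal (U n)) < top"
  shows "U \<longlonglongrightarrow> enn2real (liminf (\<lambda>n. ennreal (U n)))"
proof -
  obtain w where w: "(\<lambda>n. exp (- U n / 2)) \<longlonglongrightarrow> w" using Ca by (auto simp: Cauchy_convergent_iff convergent_def)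
  have w0: "0 \<le> w" by (rule LIMSEQ_le_const[OF w]) (auto intro: less_imp_le)
  have Ueq: "U n = - 2 * ln (exp (- U n / 2))" for n by simp
  show ?thesis
  proof (cases "w > 0")
    case True
    have "(\<lambda>n. - 2 * ln (exp (- U n / 2))) \<longlonglongrightarrow> - 2 * ln w"
      by (intro tendsto_mult tendsto_const tendsto_ln[OF w]) (use True in simp)
    then have Ut: "U \<longlonglongrightarrow> - 2 * ln w" using Ueq by simp
    have a0: "0 \<le> - 2 * ln w" by (rule LIMSEQ_le_const[OF Ut]) (use U0 in auto)
    have "liminf (\<lambda>n. ennreal (U n)) = ennreal (- 2 * ln w)"
      by (rule lim_imp_Liminf) (simp, rule tendsto_ennrealI[OF Ut])
    then show ?thesis using Ut a0 by simp
  next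
    case False
    then have w00: "w = 0" using w0 by simp
    from fin obtain r where r: "0 \<le> r" "liminf (\<lambda>n. ennreal (U n)) = ennreal r"
      by (auto simp: less_top_ennreal)
    have "ennreal (r + 1) \<le> liminf (\<lambda>n. ennreal (U n))"
    proof (subst le_Liminf_iff, intro allI impI)
      fix y assume y: "y < ennreal (r + 1)"
      have "eventually (\<lambda>n. exp (- U n / 2) < exp (- (r + 1) / 2)) sequentially"
        using order_tendstoD(2)[OF w, of "exp (- (r + 1) / 2)"] w00 by simp
      then show "eventually (\<lambda>n. y < ennreal (U n)) sequentially"
      proof (rule eventually_mono)
        fix n assume "exp (- U n / 2) < exp (- (r + 1) / 2)"
        then have "r + 1 < U n" by simp
        then have "ennreal (r + 1) \<le> ennreal (U n)" by (intro ennreal_leI) simp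
        then show "y < ennreal (U n)" using y by simp
      qed
    qed
    then have "ennreal (r + 1) \<le> ennreal r" using r by simp
    then have False using r(1) by (simp add: ennreal_le_iff)
    then show ?thesis ..
  qed
qed

lemma core:
  fixes M :: "'a measure" and T :: "int^'d \<Rightarrow> 'a \<Rightarrow> 'a" and R :: "(int^'d) set"
    and l :: nat and G :: "nat \<Rightarrow> 'a \<times> (int^'d) list \<Rightarrow> real" and g :: "'a \<times> (int^'d) list \<Rightarrow> real"
    and Fs :: "nat \<Rightarrow> 'a \<times> (int^'d) list \<Rightarrow> int^'d \<Rightarrow> real" and c :: real
  assumes es: "ergodic_system M T R" and fR: "finite R" and Rne: "R \<noteq> {}"
    and gi: "\<And>zs. zs \<in> lists R \<Longrightarrow> length zs = l \<Longrightarrow> integrable M (\<lambda>\<omega>. g (\<omega>, zs))"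
    and Gi: "\<And>k zs. zs \<in> lists R \<Longrightarrow> length zs = l \<Longrightarrow> integrable M (\<lambda>\<omega>. G k (\<omega>, zs))"
    and Gc: "\<And>zs. zs \<in> lists R \<Longrightarrow> length zs = l \<Longrightarrow> (\<lambda>k. \<integral>\<omega>. \<bar>G k (\<omega>, zs) - g (\<omega>, zs)\<bar> \<partial>M) \<longlonglongrightarrow> 0"
    and FK: "\<And>k. classK M T R l (Fs k)"
    and bnd: "AE \<omega> in M. \<forall>k zs. zs \<in> lists R \<and> length zs = l \<longrightarrow>
                 (\<Sum>z\<in>R. exp (G k (\<omega>, zs) + Fs k (\<omega>, zs) z) / real (card R)) \<le> exp c"
    and mc: "\<And>zs z. zs \<in> lists R \<Longrightarrow> length zs = l \<Longrightarrow> z \<in> R \<Longrightarrow> convergent (\<lambda>k. \<integral>\<omega>. Fs k (\<omega>, zs) z \<partial>M)"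
  shows "underK M T R l g \<le> ereal c"
proof -
  interpret prob_space M using es_prob[OF es] .
  define Zs where "Zs = {zs. zs \<in> lists R \<and> length zs = l}"
  define I where "I = Zs \<times> R"
  have fZ: "finite Zs" unfolding Zs_def using finite_Zs[OF fR] .
  have fI: "finite I" unfolding I_def using fZ fR by simp
  have cR: "0 < real (card R)" using fR Rne by (simp add: card_gt_0_iff)
  define C where "C = c + ln (real (card R))"
  have expC: "exp C = real (card R) * exp c" unfolding C_def using cR by (simp add: exp_add)
  have Fi: "integrable M (\<lambda>\<omega>. Fs k (\<omega>, zs) z)" if "zs \<in> lists R" "length zs = l" "z \<in> R" for k zs z
    using FK[of k] that unfolding classK_def by blast
  have ptb: "AE \<omega> in M. \<forall>k zs z. zs \<in> lists R \<and> length zs = l \<and> z \<in> R \<longrightarrow> G k (\<omega>, zs) + Fs k (\<omega>, zs) z \<le> C"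
    using bnd
  proof eventually_elim
    case (elim \<omega>)
    show ?case
    proof (intro allI impI)
      fix k zs z assume a: "zs \<in> lists R \<and> length zs = l \<and> z \<in> R"
      have "exp (G k (\<omega>, zs) + Fs k (\<omega>, zs) z) / real (card R) \<le> (\<Sum>z\<in>R. exp (G k (\<omega>, zs) + Fs k (\<omega>, zs) z) / real (card R))"
        by (rule member_le_sum) (use a fR in auto)
      also have "\<dots> \<le> exp c" using elim a by blast
      finally have "exp (G k (\<omega>, zs) + Fs k (\<omega>, zs) z) \<le> exp C" unfolding expC using cR by (simp add: field_simps)
      then show "G k (\<omega>, zs) + Fs k (\<omega>, zs) z \<le> C" by simp
    qed
  qed
  define m where "m k zs z = (\<integral>\<omega>. Fs k (\<omega>, zs) z \<partial>M)" for k zs z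
  define mstar where "mstar zs z = lim (\<lambda>k. m k zs z)" for zs z
  have mconv: "(\<lambda>k. m k zs z) \<longlonglongrightarrow> mstar zs z" if "zs \<in> lists R" "length zs = l" "z \<in> R" for zs z
    using mc[OF that] unfolding m_def mstar_def by (simp add: convergent_LIMSEQ_iff)
  define u where "u k i \<omega> = max 0 (C - G k (\<omega>, fst i) - Fs k (\<omega>, fst i) (snd i))" for k i \<omega>
  have um: "u k i \<in> borel_measurable M" if "i \<in> I" for k i
  proof -
    have "(\<lambda>\<omega>. G k (\<omega>, fst i)) \<in> borel_measurable M" "(\<lambda>\<omega>. Fs k (\<omega>, fst i) (snd i)) \<in> borel_measurable M"
      using Gi Fi that unfolding I_def Zs_def by (auto simp: mem_Times_iff)
    then show ?thesis unfolding u_def by measurable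
  qed
  have un: "0 \<le> u k i \<omega>" for k i \<omega> unfolding u_def by simp
  have uae: "AE \<omega> in M. \<forall>k. \<forall>i\<in>I. u k i \<omega> = C - G k (\<omega>, fst i) - Fs k (\<omega>, fst i) (snd i)"
    using ptb
  proof eventually_elim
    case (elim \<omega>)
    show ?case
    proof (intro allI ballI)
      fix k i assume "i \<in> I"
      then have "fst i \<in> lists R \<and> length (fst i) = l \<and> snd i \<in> R" unfolding I_def Zs_def by (auto simp: mem_Times_iff)
      then have "G k (\<omega>, fst i) + Fs k (\<omega>, fst i) (snd i) \<le> C" using elim by blast
      then show "u k i \<omega> = C - G k (\<omega>, fst i) - Fs k (\<omega>, fst i) (snd i)" unfolding u_def by simp
    qed
  qed
  obtain L where Lt: "\<And>n. ctail n (L n)" and LC: "\<forall>i\<in>I. \<forall>e>0. \<exists>N. \<forall>p\<ge>N. \<forall>q\<ge>N.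
     (\<integral>\<omega>. \<bar>exp (- cc (L p) (\<lambda>k. u k i \<omega>) / 2) - exp (- cc (L q) (\<lambda>k. u k i \<omega>) / 2)\<bar> \<partial>M) < e"
  proof -
    have "\<exists>L. (\<forall>n. ctail n (L n)) \<and> (\<forall>i\<in>I. \<forall>e>0. \<exists>N. \<forall>p\<ge>N. \<forall>q\<ge>N.
     (\<integral>\<omega>. \<bar>exp (- cc (L p) (\<lambda>k. u k i \<omega>) / 2) - exp (- cc (L q) (\<lambda>k. u k i \<omega>) / 2)\<bar> \<partial>M) < e)"
    proof (rule DS[OF prob_space_axioms fI])
      show "\<And>k i. i \<in> I \<Longrightarrow> u k i \<in> borel_measurable M" by (rule um)
      show "\<And>k i \<omega>. 0 \<le> u k i \<omega>" by (rule un)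
    qed
    then show ?thesis using that by blast
  qed
  define Gt where "Gt Lm zs \<omega> = cc Lm (\<lambda>k. G k (\<omega>, zs))" for Lm zs \<omega>
  have Gtc: "(\<lambda>n. \<integral>\<omega>. \<bar>Gt (L n) zs \<omega> - g (\<omega>, zs)\<bar> \<partial>M) \<longlonglongrightarrow> 0" if zs: "zs \<in> Zs" for zs
  proof (rule tendsto_sandwich[of "\<lambda>n. 0" _ _ "\<lambda>n. cc (L n) (\<lambda>k. \<integral>\<omega>. \<bar>G k (\<omega>, zs) - g (\<omega>, zs)\<bar> \<partial>M)"])
    have zs': "zs \<in> lists R" "length zs = l" using zs unfolding Zs_def by auto
    have ia: "integrable M (\<lambda>\<omega>. \<bar>G k (\<omega>, zs) - g (\<omega>, zs)\<bar>)" for k using Gi[OF zs'] gi[OF zs'] by auto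
    show "\<forall>\<^sub>F n in sequentially. 0 \<le> (\<integral>\<omega>. \<bar>Gt (L n) zs \<omega> - g (\<omega>, zs)\<bar> \<partial>M)" by auto
    show "\<forall>\<^sub>F n in sequentially. (\<integral>\<omega>. \<bar>Gt (L n) zs \<omega> - g (\<omega>, zs)\<bar> \<partial>M) \<le> cc (L n) (\<lambda>k. \<integral>\<omega>. \<bar>G k (\<omega>, zs) - g (\<omega>, zs)\<bar> \<partial>M)"
    proof (rule always_eventually, rule allI)
      fix n
      have "(\<integral>\<omega>. \<bar>Gt (L n) zs \<omega> - g (\<omega>, zs)\<bar> \<partial>M) \<le> (\<integral>\<omega>. cc (L n) (\<lambda>k. \<bar>G k (\<omega>, zs) - g (\<omega>, zs)\<bar>) \<partial>M)"
      proof (rule integral_mono)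
        show "integrable M (\<lambda>\<omega>. \<bar>Gt (L n) zs \<omega> - g (\<omega>, zs)\<bar>)"
          unfolding Gt_def using integral_cc(1)[of M "\<lambda>k \<omega>. G k (\<omega>, zs)", OF Gi[OF zs']] gi[OF zs'] by auto
        show "integrable M (\<lambda>\<omega>. cc (L n) (\<lambda>k. \<bar>G k (\<omega>, zs) - g (\<omega>, zs)\<bar>))"
          using integral_cc(1)[of M "\<lambda>k \<omega>. \<bar>G k (\<omega>, zs) - g (\<omega>, zs)\<bar>", OF ia] .
        show "\<bar>Gt (L n) zs \<omega> - g (\<omega>, zs)\<bar> \<le> cc (L n) (\<lambda>k. \<bar>G k (\<omega>, zs) - g (\<omega>, zs)\<bar>)" for \<omega>
          unfolding Gt_def by (rule cc_abs[OF Lt])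
      qed
      also have "\<dots> = cc (L n) (\<lambda>k. \<integral>\<omega>. \<bar>G k (\<omega>, zs) - g (\<omega>, zs)\<bar> \<partial>M)"
        using integral_cc(2)[of M "\<lambda>k \<omega>. \<bar>G k (\<omega>, zs) - g (\<omega>, zs)\<bar>", OF ia] .
      finally show "(\<integral>\<omega>. \<bar>Gt (L n) zs \<omega> - g (\<omega>, zs)\<bar> \<partial>M) \<le> cc (L n) (\<lambda>k. \<integral>\<omega>. \<bar>G k (\<omega>, zs) - g (\<omega>, zs)\<bar> \<partial>M)" .
    qed
    show "(\<lambda>n. 0) \<longlonglongrightarrow> 0" by simp
    show "(\<lambda>n. cc (L n) (\<lambda>k. \<integral>\<omega>. \<bar>G k (\<omega>, zs) - g (\<omega>, zs)\<bar> \<partial>M)) \<longlonglongrightarrow> 0"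
      by (rule cc_tendsto[OF Lt Gc[OF zs']])
  qed
  have sint: "integrable M (\<lambda>\<omega>. exp (- cc (Lm) (\<lambda>k. u k i \<omega>) / 2))" if "ctail n Lm" "i \<in> I" for n Lm i
  proof (rule integrable_const_bound[where B=1])
    have "0 \<le> cc Lm (\<lambda>k. u k i \<omega>)" for \<omega> using cc_nonneg[OF that(1)] un by auto
    then show "AE \<omega> in M. norm (exp (- cc Lm (\<lambda>k. u k i \<omega>) / 2)) \<le> 1" by auto
    have [measurable]: "\<And>k. u k i \<in> borel_measurable M" using um[OF that(2)] .
    show "(\<lambda>\<omega>. exp (- cc Lm (\<lambda>k. u k i \<omega>) / 2)) \<in> borel_measurable M" by measurable
  qed
  define P where "P j r = (case j of Inl i \<Rightarrow> (AE \<omega> in M. Cauchy (\<lambda>n. exp (- cc (L (r n)) (\<lambda>k. u k i \<omega>) / 2)))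
     | Inr zs \<Rightarrow> (AE \<omega> in M. (\<lambda>n. Gt (L (r n)) zs \<omega>) \<longlonglongrightarrow> g (\<omega>, zs)))"
    for j :: "((int^'d) list \<times> (int^'d)) + (int^'d) list" and r :: "nat \<Rightarrow> nat"
  have "\<exists>r::nat\<Rightarrow>nat. strict_mono r \<and> (\<forall>j\<in>Inl ` I \<union> Inr ` Zs. P j r)"
  proof (rule finite_subseq)
    show "finite (Inl ` I \<union> Inr ` Zs)" using fI fZ by simp
  next
    fix j and r :: "nat \<Rightarrow> nat" assume j: "j \<in> Inl ` I \<union> Inr ` Zs" and r: "strict_mono r"
    show "\<exists>r'. strict_mono r' \<and> P j (r \<circ> r')"
    proof (cases j)
      case (Inl i)
      then have i: "i \<in> I" using j by auto
      define s where "s n \<omega> = exp (- cc (L (r n)) (\<lambda>k. u k i \<omega>) / 2)" for n \<omega>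
      have si: "integrable M (s n)" for n unfolding s_def using sint[OF Lt i] .
      have sc: "\<exists>N. \<forall>p\<ge>N. \<forall>q\<ge>N. (LINT x|M. norm (s p x - s q x)) < e" if e: "e > 0" for e
      proof -
        from LC i e obtain N where N: "\<forall>p\<ge>N. \<forall>q\<ge>N.
          (\<integral>\<omega>. \<bar>exp (- cc (L p) (\<lambda>k. u k i \<omega>) / 2) - exp (- cc (L q) (\<lambda>k. u k i \<omega>) / 2)\<bar> \<partial>M) < e" by blast
        have "\<forall>p\<ge>N. \<forall>q\<ge>N. (LINT x|M. norm (s p x - s q x)) < e"
        proof (intro allI impI)
          fix p q assume "N \<le> p" "N \<le> q"
          then have "N \<le> r p" "N \<le> r q" using seq_suble[OF r] le_trans by blast+
          then show "(LINT x|M. norm (s p x - s q x)) < e" using N unfolding s_def by auto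
        qed
        then show ?thesis by blast
      qed
      obtain r' where r': "strict_mono r'" "AE x in M. Cauchy (\<lambda>i. s (r' i) x)"
        using cauchy_L1_AE_cauchy_subseq[OF si sc] by metis
      have "P j (r \<circ> r')" unfolding P_def Inl using r'(2) unfolding s_def by simp
      then show ?thesis using r'(1) by blast
    next
      case (Inr zs)
      then have zs: "zs \<in> Zs" using j by auto
      then have zs': "zs \<in> lists R" "length zs = l" unfolding Zs_def by auto
      define s where "s n \<omega> = Gt (L (r n)) zs \<omega> - g (\<omega>, zs)" for n \<omega>
      have si: "integrable M (s n)" for n unfolding s_def Gt_def
        using integral_cc(1)[of M "\<lambda>k \<omega>. G k (\<omega>, zs)", OF Gi[OF zs']] gi[OF zs'] by auto
      have "(\<lambda>n. \<integral>\<omega>. \<bar>Gt (L (r n)) zs \<omega> - g (\<omega>, zs)\<bar> \<partial>M) \<longlonglongrightarrow> 0"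
        using LIMSEQ_subseq_LIMSEQ[OF Gtc[OF zs] r] by (simp add: o_def)
      then have sc: "(\<lambda>n. \<integral>x. norm (s n x) \<partial>M) \<longlonglongrightarrow> 0" unfolding s_def by simp
      obtain r' where r': "strict_mono r'" "AE x in M. (\<lambda>n. s (r' n) x) \<longlonglongrightarrow> 0"
        using tendsto_L1_AE_subseq[OF si sc] by blast
      have "AE \<omega> in M. (\<lambda>n. Gt (L (r (r' n))) zs \<omega>) \<longlonglongrightarrow> g (\<omega>, zs)"
        using r'(2) by eventually_elim (simp add: s_def LIM_zero_cancel)
      then have "P j (r \<circ> r')" unfolding P_def Inr by simp
      then show ?thesis using r'(1) by blast
    qed
  next
    fix j and r r' :: "nat \<Rightarrow> nat" assume j: "j \<in> Inl ` I \<union> Inr ` Zs" and P: "P j r" and r': "strict_mono r'"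
    show "P j (r \<circ> r')"
    proof (cases j)
      case (Inl i)
      from P have "AE \<omega> in M. Cauchy (\<lambda>n. exp (- cc (L (r n)) (\<lambda>k. u k i \<omega>) / 2))" unfolding P_def Inl by simp
      then have "AE \<omega> in M. Cauchy (\<lambda>n. exp (- cc (L (r (r' n))) (\<lambda>k. u k i \<omega>) / 2))"
        by eventually_elim (drule Cauchy_subseq_Cauchy[OF _ r'], simp add: o_def)
      then show ?thesis unfolding P_def Inl by simp
    next
      case (Inr zs)
      from P have "AE \<omega> in M. (\<lambda>n. Gt (L (r n)) zs \<omega>) \<longlonglongrightarrow> g (\<omega>, zs)" unfolding P_def Inr by simp
      then have "AE \<omega> in M. (\<lambda>n. Gt (L (r (r' n))) zs \<omega>) \<longlonglongrightarrow> g (\<omega>, zs)"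
        by eventually_elim (drule LIMSEQ_subseq_LIMSEQ[OF _ r'], simp add: o_def)
      then show ?thesis unfolding P_def Inr by simp
    qed
  qed
  then obtain r2 where r2: "strict_mono r2" "\<forall>j\<in>Inl ` I \<union> Inr ` Zs. P j r2" by blast
  define L2 where "L2 n = L (r2 n)" for n
  have Lt2: "ctail n (L2 n)" for n unfolding L2_def using Lt[of "r2 n"] seq_suble[OF r2(1), of n] ctail_mono by blast
  have aeW: "AE \<omega> in M. \<forall>i\<in>I. Cauchy (\<lambda>n. exp (- cc (L2 n) (\<lambda>k. u k i \<omega>) / 2))"
  proof (rule AE_finite_allI[OF fI])
    fix i assume "i \<in> I"
    then have "P (Inl i) r2" using r2(2) by auto
    then show "AE \<omega> in M. Cauchy (\<lambda>n. exp (- cc (L2 n) (\<lambda>k. u k i \<omega>) / 2))" unfolding P_def L2_def by simp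
  qed
  have aeG: "AE \<omega> in M. \<forall>zs\<in>Zs. (\<lambda>n. Gt (L2 n) zs \<omega>) \<longlonglongrightarrow> g (\<omega>, zs)"
  proof (rule AE_finite_allI[OF fZ])
    fix zs assume "zs \<in> Zs"
    then have "P (Inr zs) r2" using r2(2) by auto
    then show "AE \<omega> in M. (\<lambda>n. Gt (L2 n) zs \<omega>) \<longlonglongrightarrow> g (\<omega>, zs)" unfolding P_def L2_def by simp
  qed
  define Ut where "Ut n i \<omega> = cc (L2 n) (\<lambda>k. u k i \<omega>)" for n i \<omega>
  have Ut0: "0 \<le> Ut n i \<omega>" for n i \<omega> unfolding Ut_def using cc_nonneg[OF Lt2] un by auto
  have Iv: "fst i \<in> lists R" "length (fst i) = l" "snd i \<in> R" if "i \<in> I" for i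
    using that unfolding I_def Zs_def by (auto simp: mem_Times_iff)
  have ui: "integrable M (u k i)" if i: "i \<in> I" for k i
  proof -
    have "integrable M (\<lambda>\<omega>. max 0 (C - G k (\<omega>, fst i) - Fs k (\<omega>, fst i) (snd i)))"
      using Gi[OF Iv(1,2)[OF i]] Fi[OF Iv[OF i]] by (intro integrable_max) auto
    then show ?thesis unfolding u_def by simp
  qed
  have Uti: "integrable M (Ut n i)" if "i \<in> I" for n i
    unfolding Ut_def using integral_cc(1)[of M "\<lambda>k. u k i", OF ui[OF that]] by simp
  have Eu: "(\<integral>\<omega>. u k i \<omega> \<partial>M) = C - (\<integral>\<omega>. G k (\<omega>, fst i) \<partial>M) - m k (fst i) (snd i)" if i: "i \<in> I" for k i
  proof -
    have "(\<integral>\<omega>. u k i \<omega> \<partial>M) = (\<integral>\<omega>. C - G k (\<omega>, fst i) - Fs k (\<omega>, fst i) (snd i) \<partial>M)"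
      by (rule integral_cong_AE) (use um[OF i] Gi[OF Iv(1,2)[OF i]] Fi[OF Iv[OF i]] uae i in auto)
    also have "\<dots> = C - (\<integral>\<omega>. G k (\<omega>, fst i) \<partial>M) - m k (fst i) (snd i)"
      unfolding m_def using Gi[OF Iv(1,2)[OF i]] Fi[OF Iv[OF i]]
      by (simp add: Bochner_Integration.integral_diff prob_space)
    finally show ?thesis .
  qed
  have EGc: "(\<lambda>k. \<integral>\<omega>. G k (\<omega>, zs) \<partial>M) \<longlonglongrightarrow> (\<integral>\<omega>. g (\<omega>, zs) \<partial>M)" if "zs \<in> lists R" "length zs = l" for zs
  proof -
    have "(\<lambda>k. (\<integral>\<omega>. G k (\<omega>, zs) \<partial>M) - (\<integral>\<omega>. g (\<omega>, zs) \<partial>M)) \<longlonglongrightarrow> 0"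
    proof (rule Lim_null_comparison[OF _ Gc[OF that]])
      show "\<forall>\<^sub>F k in sequentially. norm ((\<integral>\<omega>. G k (\<omega>, zs) \<partial>M) - (\<integral>\<omega>. g (\<omega>, zs) \<partial>M)) \<le> (\<integral>\<omega>. \<bar>G k (\<omega>, zs) - g (\<omega>, zs)\<bar> \<partial>M)"
      proof (rule always_eventually, rule allI)
        fix k
        have "(\<integral>\<omega>. G k (\<omega>, zs) \<partial>M) - (\<integral>\<omega>. g (\<omega>, zs) \<partial>M) = (\<integral>\<omega>. G k (\<omega>, zs) - g (\<omega>, zs) \<partial>M)"
          using Gi[OF that] gi[OF that] by simp
        then show "norm ((\<integral>\<omega>. G k (\<omega>, zs) \<partial>M) - (\<integral>\<omega>. g (\<omega>, zs) \<partial>M)) \<le> (\<integral>\<omega>. \<bar>G k (\<omega>, zs) - g (\<omega>, zs)\<bar> \<partial>M)"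
          using integral_abs_bound[of M "\<lambda>\<omega>. G k (\<omega>, zs) - g (\<omega>, zs)"] by simp
      qed
    qed
    then show ?thesis by (rule LIM_zero_cancel)
  qed
  define Lu where "Lu i = C - (\<integral>\<omega>. g (\<omega>, fst i) \<partial>M) - mstar (fst i) (snd i)" for i
  have EUtc: "(\<lambda>n. \<integral>\<omega>. Ut n i \<omega> \<partial>M) \<longlonglongrightarrow> Lu i" if i: "i \<in> I" for i
  proof -
    have "(\<integral>\<omega>. Ut n i \<omega> \<partial>M) = C - cc (L2 n) (\<lambda>k. \<integral>\<omega>. G k (\<omega>, fst i) \<partial>M) - cc (L2 n) (\<lambda>k. m k (fst i) (snd i))" for n
    proof -
      have "(\<integral>\<omega>. Ut n i \<omega> \<partial>M) = cc (L2 n) (\<lambda>k. \<integral>\<omega>. u k i \<omega> \<partial>M)"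
        unfolding Ut_def using integral_cc(2)[of M "\<lambda>k. u k i", OF ui[OF i]] by simp
      also have "\<dots> = cc (L2 n) (\<lambda>k. C - (\<integral>\<omega>. G k (\<omega>, fst i) \<partial>M) - m k (fst i) (snd i))"
        using Eu[OF i] by simp
      also have "\<dots> = C - cc (L2 n) (\<lambda>k. \<integral>\<omega>. G k (\<omega>, fst i) \<partial>M) - cc (L2 n) (\<lambda>k. m k (fst i) (snd i))"
        using cc_diff cc_const[OF Lt2] by simp
      finally show ?thesis .
    qed
    moreover have "(\<lambda>n. C - cc (L2 n) (\<lambda>k. \<integral>\<omega>. G k (\<omega>, fst i) \<partial>M) - cc (L2 n) (\<lambda>k. m k (fst i) (snd i))) \<longlonglongrightarrow> Lu i"
      unfolding Lu_def
      by (intro tendsto_diff tendsto_const cc_tendsto[OF Lt2] EGc[OF Iv(1,2)[OF i]] mconv[OF Iv[OF i]])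
    ultimately show ?thesis by simp
  qed
  have Lu0: "0 \<le> Lu i" if "i \<in> I" for i
    by (rule LIMSEQ_le_const[OF EUtc[OF that]]) (auto intro!: integral_nonneg_AE simp: Ut0)
  have Utm[measurable]: "Ut n i \<in> borel_measurable M" if "i \<in> I" for n i using Uti[OF that] by auto
  have fatou: "(\<integral>\<^sup>+\<omega>. liminf (\<lambda>n. ennreal (Ut n i \<omega>)) \<partial>M) \<le> ennreal (Lu i)" if i: "i \<in> I" for i
  proof -
    have "(\<integral>\<^sup>+\<omega>. liminf (\<lambda>n. ennreal (Ut n i \<omega>)) \<partial>M) \<le> liminf (\<lambda>n. \<integral>\<^sup>+\<omega>. ennreal (Ut n i \<omega>) \<partial>M)"
      by (rule nn_integral_liminf) (use Utm[OF i] in auto)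
    also have "(\<lambda>n. \<integral>\<^sup>+\<omega>. ennreal (Ut n i \<omega>) \<partial>M) = (\<lambda>n. ennreal (\<integral>\<omega>. Ut n i \<omega> \<partial>M))"
      by (intro ext nn_integral_eq_integral Uti[OF i]) (auto simp: Ut0)
    also have "liminf \<dots> = ennreal (Lu i)"
      by (rule lim_imp_Liminf) (auto intro: tendsto_ennrealI[OF EUtc[OF i]])
    finally show ?thesis .
  qed
  define Ulim where "Ulim i \<omega> = enn2real (liminf (\<lambda>n. ennreal (Ut n i \<omega>)))" for i \<omega>
  have lm[measurable]: "(\<lambda>\<omega>. liminf (\<lambda>n. ennreal (Ut n i \<omega>))) \<in> borel_measurable M" if "i \<in> I" for i
    using Utm[OF that] by measurable
  have Ulm[measurable]: "Ulim i \<in> borel_measurable M" if "i \<in> I" for i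
    unfolding Ulim_def using lm[OF that] by measurable
  have aefin: "AE \<omega> in M. \<forall>i\<in>I. liminf (\<lambda>n. ennreal (Ut n i \<omega>)) < top"
  proof (rule AE_finite_allI[OF fI])
    fix i assume i: "i \<in> I"
    have "(\<integral>\<^sup>+\<omega>. liminf (\<lambda>n. ennreal (Ut n i \<omega>)) \<partial>M) < \<infinity>" using fatou[OF i] by (simp add: le_less_trans)
    from finite_nn_integral_imp_ae_finite[OF lm[OF i] this]
    show "AE \<omega> in M. liminf (\<lambda>n. ennreal (Ut n i \<omega>)) < top" by simp
  qed
  have aeU: "AE \<omega> in M. \<forall>i\<in>I. (\<lambda>n. Ut n i \<omega>) \<longlonglongrightarrow> Ulim i \<omega>"
    using aeW aefin
  proof eventually_elim
    case (elim \<omega>)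
    show ?case
    proof
      fix i assume i: "i \<in> I"
      show "(\<lambda>n. Ut n i \<omega>) \<longlonglongrightarrow> Ulim i \<omega>" unfolding Ulim_def
        by (rule ptw_lim) (use Ut0 elim i in \<open>auto simp: Ut_def\<close>)
    qed
  qed
  have Uli: "integrable M (Ulim i)" and EUl: "(\<integral>\<omega>. Ulim i \<omega> \<partial>M) \<le> Lu i" if i: "i \<in> I" for i
  proof -
    have Ul0: "0 \<le> Ulim i \<omega>" for \<omega> unfolding Ulim_def by simp
    have "(\<integral>\<^sup>+\<omega>. ennreal (Ulim i \<omega>) \<partial>M) = (\<integral>\<^sup>+\<omega>. liminf (\<lambda>n. ennreal (Ut n i \<omega>)) \<partial>M)"
      by (rule nn_integral_cong_AE) (use aefin i in \<open>auto simp: Ulim_def elim!: eventually_mono\<close>)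
    also have "\<dots> \<le> ennreal (Lu i)" by (rule fatou[OF i])
    finally have nn: "(\<integral>\<^sup>+\<omega>. ennreal (Ulim i \<omega>) \<partial>M) \<le> ennreal (Lu i)" .
    show ii: "integrable M (Ulim i)"
      by (rule integrableI_nonneg) (use Ulm[OF i] Ul0 nn in \<open>auto simp: le_less_trans\<close>)
    have "ennreal (\<integral>\<omega>. Ulim i \<omega> \<partial>M) = (\<integral>\<^sup>+\<omega>. ennreal (Ulim i \<omega>) \<partial>M)"
      by (rule nn_integral_eq_integral[OF ii, symmetric]) (simp add: Ul0)
    then have "ennreal (\<integral>\<omega>. Ulim i \<omega> \<partial>M) \<le> ennreal (Lu i)" using nn by simp
    then show "(\<integral>\<omega>. Ulim i \<omega> \<partial>M) \<le> Lu i" using Lu0[OF i] by (simp add: ennreal_le_iff)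
  qed
  have Ii: "(zs, z) \<in> I \<longleftrightarrow> zs \<in> lists R \<and> length zs = l \<and> z \<in> R" for zs z
    unfolding I_def Zs_def by auto
  define Flim where "Flim \<eta> z = C - g \<eta> - Ulim (snd \<eta>, z) (fst \<eta>)" for \<eta> z
  define Ft where "Ft n \<eta> z = cc (L2 n) (\<lambda>k. Fs k \<eta> z)" for n \<eta> z
  have aeF: "AE \<omega> in M. \<forall>zs z. zs \<in> lists R \<and> length zs = l \<and> z \<in> R \<longrightarrow> (\<lambda>n. Ft n (\<omega>, zs) z) \<longlonglongrightarrow> Flim (\<omega>, zs) z"
    using uae aeG aeU
  proof eventually_elim
    case (elim \<omega>)
    show ?case
    proof (intro allI impI)
      fix zs z assume v: "zs \<in> lists R \<and> length zs = l \<and> z \<in> R"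
      then have i: "(zs, z) \<in> I" using Ii by simp
      have "Ft n (\<omega>, zs) z = C - Gt (L2 n) zs \<omega> - Ut n (zs, z) \<omega>" for n
      proof -
        have "Ft n (\<omega>, zs) z = cc (L2 n) (\<lambda>k. C - G k (\<omega>, zs) - u k (zs, z) \<omega>)"
          unfolding Ft_def using elim(1) i by simp
        also have "\<dots> = C - Gt (L2 n) zs \<omega> - Ut n (zs, z) \<omega>"
          unfolding Gt_def Ut_def using cc_diff cc_const[OF Lt2] by simp
        finally show ?thesis .
      qed
      moreover have "(\<lambda>n. C - Gt (L2 n) zs \<omega> - Ut n (zs, z) \<omega>) \<longlonglongrightarrow> C - g (\<omega>, zs) - Ulim (zs, z) \<omega>"
        using elim(2) elim(3) i v unfolding Zs_def by (intro tendsto_diff tendsto_const) auto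
      ultimately show "(\<lambda>n. Ft n (\<omega>, zs) z) \<longlonglongrightarrow> Flim (\<omega>, zs) z" unfolding Flim_def by simp
    qed
  qed
  have Fli: "integrable M (\<lambda>\<omega>. Flim (\<omega>, zs) z)" if "zs \<in> lists R" "length zs = l" "z \<in> R" for zs z
    unfolding Flim_def using gi[OF that(1,2)] Uli[of "(zs, z)"] that Ii by simp
  define mlim where "mlim zs z = (\<integral>\<omega>. Flim (\<omega>, zs) z \<partial>M)" for zs z
  have mlim_ge: "mstar zs z \<le> mlim zs z" if v: "zs \<in> lists R" "length zs = l" "z \<in> R" for zs z
  proof -
    have i: "(zs, z) \<in> I" using v Ii by simp
    have "mlim zs z = C - (\<integral>\<omega>. g (\<omega>, zs) \<partial>M) - (\<integral>\<omega>. Ulim (zs, z) \<omega> \<partial>M)"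
      unfolding mlim_def Flim_def using gi[OF v(1,2)] Uli[OF i] by (simp add: prob_space)
    then show ?thesis using EUl[OF i] unfolding Lu_def by simp
  qed
  define D where "D zs z = mlim zs z - mstar zs z" for zs z
  define Fnew where "Fnew \<eta> z = Flim \<eta> z - D (snd \<eta>) z" for \<eta> z
  have Fnewi: "integrable M (\<lambda>\<omega>. Fnew (\<omega>, zs) z)" if "zs \<in> lists R" "length zs = l" "z \<in> R" for zs z
    unfolding Fnew_def using Fli[OF that] by simp
  have Fnewm: "(\<integral>\<omega>. Fnew (\<omega>, zs) z \<partial>M) = mstar zs z" if "zs \<in> lists R" "length zs = l" "z \<in> R" for zs z
    unfolding Fnew_def D_def mlim_def using Fli[OF that] by (simp add: prob_space)
  have mpath: "msum (m k) zs as = (\<integral>\<omega>. pathsum T (Fs k) (\<omega>, zs) as \<partial>M)"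
    "integrable M (\<lambda>\<omega>. pathsum T (Fs k) (\<omega>, zs) as)"
    if "as \<in> lists R" "zs \<in> lists R" "length zs = l" for k zs as
    using path_mean[OF es, of l "Fs k", OF Fi that] unfolding m_def by auto
  have lpath: "msum mlim zs as = (\<integral>\<omega>. pathsum T Flim (\<omega>, zs) as \<partial>M)"
    "integrable M (\<lambda>\<omega>. pathsum T Flim (\<omega>, zs) as)"
    if "as \<in> lists R" "zs \<in> lists R" "length zs = l" for zs as
    using path_mean[OF es, of l Flim, OF Fli that] unfolding mlim_def by auto
  have msK: "msum (m k) (drop (n - l) as) as = 0" if "l \<le> n" "as \<in> lists R" "length as = n" for k n as
  proof -
    have "drop (n - l) as \<in> lists R" "length (drop (n - l) as) = l" using that by (auto dest: in_set_dropD)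
    then show ?thesis using mpath(1)[OF that(2)] FK[of k] that unfolding classK_def by auto
  qed
  have K2: "(\<integral>\<omega>. pathsum T Fnew (\<omega>, drop (n - l) as) as \<partial>M) = 0" if "l \<le> n" "as \<in> lists R" "length as = n" for n as
  proof -
    have d: "drop (n - l) as \<in> lists R" "length (drop (n - l) as) = l" using that by (auto dest: in_set_dropD)
    have "(\<integral>\<omega>. pathsum T Fnew (\<omega>, drop (n - l) as) as \<partial>M) = msum (\<lambda>zs z. \<integral>\<omega>. Fnew (\<omega>, zs) z \<partial>M) (drop (n - l) as) as"
      using path_mean[OF es, of l Fnew, OF Fnewi that(2) d] by auto
    also have "\<dots> = msum mstar (drop (n - l) as) as"
      by (rule msum_cong[OF Fnewm that(2) d])
    also have "\<dots> = 0"
    proof (rule LIMSEQ_unique)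
      show "(\<lambda>k. msum (m k) (drop (n - l) as) as) \<longlonglongrightarrow> msum mstar (drop (n - l) as) as"
        by (rule msum_tendsto[OF mconv that(2) d])
      show "(\<lambda>k. msum (m k) (drop (n - l) as) as) \<longlonglongrightarrow> 0" using msK[OF that] by simp
    qed
    finally show ?thesis .
  qed
  have aeK: "AE \<omega> in M. \<forall>k zs as bs. zs \<in> lists R \<and> length zs = l \<and> as \<in> lists R \<and> bs \<in> lists R \<and>
         endpt T (\<omega>, zs) as = endpt T (\<omega>, zs) bs \<longrightarrow>
         pathsum T (Fs k) (\<omega>, zs) as = pathsum T (Fs k) (\<omega>, zs) bs"
    using FK unfolding classK_def AE_all_countable by blast
  have aePS: "AE \<omega> in M. \<forall>as. as \<in> lists R \<longrightarrow> (\<forall>zs. zs \<in> lists R \<and> length zs = l \<longrightarrow>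
      (\<lambda>n. pathsum T (Ft n) (\<omega>, zs) as) \<longlonglongrightarrow> pathsum T Flim (\<omega>, zs) as)"
    unfolding AE_all_countable
  proof
    fix as :: "(int^'d) list"
    show "AE \<omega> in M. as \<in> lists R \<longrightarrow> (\<forall>zs. zs \<in> lists R \<and> length zs = l \<longrightarrow>
      (\<lambda>n. pathsum T (Ft n) (\<omega>, zs) as) \<longlonglongrightarrow> pathsum T Flim (\<omega>, zs) as)"
    proof (cases "as \<in> lists R")
      case True
      show ?thesis using pathsum_conv[OF es fR aeF True] by simp
    qed simp
  qed
  have Ftsum: "pathsum T (Ft n) \<eta> as = cc (L2 n) (\<lambda>k. pathsum T (Fs k) \<eta> as)" for n \<eta> as
  proof -
    have "Ft n = (\<lambda>\<eta> z. \<Sum>k\<in>{k. L2 n k \<noteq> 0}. L2 n k * Fs k \<eta> z)" unfolding Ft_def cc_def by simp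
    then show ?thesis unfolding cc_def by (simp add: pathsum_sum)
  qed
  have coc1: "AE \<omega> in M. \<forall>zs as bs. zs \<in> lists R \<and> length zs = l \<and> as \<in> lists R \<and> bs \<in> lists R \<and>
         endpt T (\<omega>, zs) as = endpt T (\<omega>, zs) bs \<longrightarrow>
         pathsum T Flim (\<omega>, zs) as = pathsum T Flim (\<omega>, zs) bs"
    using aeK aePS
  proof eventually_elim
    case (elim \<omega>)
    show ?case
    proof (intro allI impI)
      fix zs as bs assume a: "zs \<in> lists R \<and> length zs = l \<and> as \<in> lists R \<and> bs \<in> lists R \<and>
         endpt T (\<omega>, zs) as = endpt T (\<omega>, zs) bs"
      have "(\<lambda>k. pathsum T (Fs k) (\<omega>, zs) as) = (\<lambda>k. pathsum T (Fs k) (\<omega>, zs) bs)"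
        using elim(1) a by (intro ext) blast
      then have eqn: "(\<lambda>n. pathsum T (Ft n) (\<omega>, zs) as) = (\<lambda>n. pathsum T (Ft n) (\<omega>, zs) bs)"
        unfolding Ftsum by simp
      have t1: "(\<lambda>n. pathsum T (Ft n) (\<omega>, zs) as) \<longlonglongrightarrow> pathsum T Flim (\<omega>, zs) as"
        using elim(2) a by blast
      have t2: "(\<lambda>n. pathsum T (Ft n) (\<omega>, zs) as) \<longlonglongrightarrow> pathsum T Flim (\<omega>, zs) bs"
        unfolding eqn using elim(2) a by blast
      show "pathsum T Flim (\<omega>, zs) as = pathsum T Flim (\<omega>, zs) bs"
        by (rule LIMSEQ_unique[OF t1 t2])
    qed
  qed
  have coc2: "AE \<omega> in M. \<forall>zs as bs. zs \<in> lists R \<and> length zs = l \<and> as \<in> lists R \<and> bs \<in> lists R \<and>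
         endpt T (\<omega>, zs) as = endpt T (\<omega>, zs) bs \<longrightarrow> msum D zs as = msum D zs bs"
    unfolding AE_all_countable
  proof (intro allI)
    fix zs as bs :: "(int^'d) list"
    show "AE \<omega> in M. zs \<in> lists R \<and> length zs = l \<and> as \<in> lists R \<and> bs \<in> lists R \<and>
         endpt T (\<omega>, zs) as = endpt T (\<omega>, zs) bs \<longrightarrow> msum D zs as = msum D zs bs"
    proof (cases "zs \<in> lists R \<and> length zs = l \<and> as \<in> lists R \<and> bs \<in> lists R")
      case False then show ?thesis by (intro AE_I2) blast
    next
      case True
      then have v: "zs \<in> lists R" "length zs = l" "as \<in> lists R" "bs \<in> lists R" by auto
      define S where "S = {\<omega>. endpt T (\<omega>, zs) as = endpt T (\<omega>, zs) bs}"
      have inv: "T z \<omega> \<in> S \<longleftrightarrow> \<omega> \<in> S" if z: "z \<in> gen_group R" and \<omega>: "\<omega> \<in> space M" for z \<omega>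
      proof -
        have ea: "endpt T (T z \<omega>, zs) as = (T z (fst (endpt T (\<omega>, zs) as)), snd (endpt T (\<omega>, zs) as))"
          by (rule endpt_T[OF es \<omega> v(1) v(3) z])
        have eb: "endpt T (T z \<omega>, zs) bs = (T z (fst (endpt T (\<omega>, zs) bs)), snd (endpt T (\<omega>, zs) bs))"
          by (rule endpt_T[OF es \<omega> v(1) v(4) z])
        have sa: "fst (endpt T (\<omega>, zs) as) \<in> space M" by (rule endpt_space[OF es \<omega> v(1) v(3)])
        have sb: "fst (endpt T (\<omega>, zs) bs) \<in> space M" by (rule endpt_space[OF es \<omega> v(1) v(4)])
        have "T z (fst (endpt T (\<omega>, zs) as)) = T z (fst (endpt T (\<omega>, zs) bs)) \<longleftrightarrow>
              fst (endpt T (\<omega>, zs) as) = fst (endpt T (\<omega>, zs) bs)"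
          using inj_onD[OF es_T(3)[OF es z] _ sa sb] by auto
        then show ?thesis unfolding S_def mem_Collect_eq ea eb by (simp add: prod_eq_iff)
      qed
      have dk: "(AE \<omega> in M. \<omega> \<notin> S) \<or> (AE \<omega> in M. pathsum T (Fs k) (\<omega>, zs) as - pathsum T (Fs k) (\<omega>, zs) bs = 0)" for k
      proof (rule dichotomy[OF es inv])
        show "(\<lambda>\<omega>. pathsum T (Fs k) (\<omega>, zs) as - pathsum T (Fs k) (\<omega>, zs) bs) \<in> borel_measurable M"
          by (rule borel_measurable_diff[OF borel_measurable_integrable[OF mpath(2)[OF v(3) v(1,2)]]
              borel_measurable_integrable[OF mpath(2)[OF v(4) v(1,2)]]])
        show "AE \<omega> in M. \<omega> \<in> S \<longrightarrow> pathsum T (Fs k) (\<omega>, zs) as - pathsum T (Fs k) (\<omega>, zs) bs = 0"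
          using aeK
        proof eventually_elim
          case (elim \<omega>)
          have "endpt T (\<omega>, zs) as = endpt T (\<omega>, zs) bs \<Longrightarrow> pathsum T (Fs k) (\<omega>, zs) as = pathsum T (Fs k) (\<omega>, zs) bs"
            using elim v by blast
          then show ?case unfolding S_def by simp
        qed
      qed
      have dl: "(AE \<omega> in M. \<omega> \<notin> S) \<or> (AE \<omega> in M. pathsum T Flim (\<omega>, zs) as - pathsum T Flim (\<omega>, zs) bs = 0)"
      proof (rule dichotomy[OF es inv])
        show "(\<lambda>\<omega>. pathsum T Flim (\<omega>, zs) as - pathsum T Flim (\<omega>, zs) bs) \<in> borel_measurable M"
          by (rule borel_measurable_diff[OF borel_measurable_integrable[OF lpath(2)[OF v(3) v(1,2)]]
              borel_measurable_integrable[OF lpath(2)[OF v(4) v(1,2)]]])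
        show "AE \<omega> in M. \<omega> \<in> S \<longrightarrow> pathsum T Flim (\<omega>, zs) as - pathsum T Flim (\<omega>, zs) bs = 0"
          using coc1
        proof eventually_elim
          case (elim \<omega>)
          have "endpt T (\<omega>, zs) as = endpt T (\<omega>, zs) bs \<Longrightarrow> pathsum T Flim (\<omega>, zs) as = pathsum T Flim (\<omega>, zs) bs"
            using elim v by blast
          then show ?case unfolding S_def by simp
        qed
      qed
      show ?thesis
      proof (cases "AE \<omega> in M. \<omega> \<notin> S")
        case True
        then show ?thesis by eventually_elim (auto simp: S_def)
      next
        case False
        have ek: "msum (m k) zs as = msum (m k) zs bs" for k
        proof -
          have "AE \<omega> in M. pathsum T (Fs k) (\<omega>, zs) as - pathsum T (Fs k) (\<omega>, zs) bs = 0" using dk[of k] False by blast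
          then have "(\<integral>\<omega>. pathsum T (Fs k) (\<omega>, zs) as \<partial>M) = (\<integral>\<omega>. pathsum T (Fs k) (\<omega>, zs) bs \<partial>M)"
            using mpath(2)[OF v(3) v(1,2)] mpath(2)[OF v(4) v(1,2)]
            by (intro integral_cong_AE) (auto elim: eventually_mono)
          then show ?thesis using mpath(1)[OF v(3) v(1,2)] mpath(1)[OF v(4) v(1,2)] by simp
        qed
        have es1: "msum mstar zs as = msum mstar zs bs"
        proof (rule LIMSEQ_unique)
          show "(\<lambda>k. msum (m k) zs as) \<longlonglongrightarrow> msum mstar zs as" by (rule msum_tendsto[OF mconv v(3) v(1,2)])
          show "(\<lambda>k. msum (m k) zs as) \<longlonglongrightarrow> msum mstar zs bs" unfolding ek by (rule msum_tendsto[OF mconv v(4) v(1,2)])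
        qed
        have es2: "msum mlim zs as = msum mlim zs bs"
        proof -
          have "AE \<omega> in M. pathsum T Flim (\<omega>, zs) as - pathsum T Flim (\<omega>, zs) bs = 0" using dl False by blast
          then have "(\<integral>\<omega>. pathsum T Flim (\<omega>, zs) as \<partial>M) = (\<integral>\<omega>. pathsum T Flim (\<omega>, zs) bs \<partial>M)"
            using lpath(2)[OF v(3) v(1,2)] lpath(2)[OF v(4) v(1,2)]
            by (intro integral_cong_AE) (auto elim: eventually_mono)
          then show ?thesis using lpath(1)[OF v(3) v(1,2)] lpath(1)[OF v(4) v(1,2)] by simp
        qed
        have "msum D zs as = msum D zs bs"
          unfolding D_def msum_diff using es1 es2 by simp
        then show ?thesis by simp
      qed
    qed
  qed
  have FK3: "AE \<omega> in M. \<forall>zs as bs. zs \<in> lists R \<and> length zs = l \<and> as \<in> lists R \<and> bs \<in> lists R \<and>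
         endpt T (\<omega>, zs) as = endpt T (\<omega>, zs) bs \<longrightarrow>
         pathsum T Fnew (\<omega>, zs) as = pathsum T Fnew (\<omega>, zs) bs"
    using coc1 coc2
  proof eventually_elim
    case (elim \<omega>)
    have pf: "pathsum T Fnew (\<omega>, zs) as = pathsum T Flim (\<omega>, zs) as - msum D zs as" for zs as
    proof -
      have "Fnew = (\<lambda>\<eta> z. Flim \<eta> z - D (snd \<eta>) z)" unfolding Fnew_def by simp
      then show ?thesis by (simp add: pathsum_diff pathsum_det)
    qed
    show ?case unfolding pf
    proof (intro allI impI)
      fix zs as bs assume a: "zs \<in> lists R \<and> length zs = l \<and> as \<in> lists R \<and> bs \<in> lists R \<and>
         endpt T (\<omega>, zs) as = endpt T (\<omega>, zs) bs"
      have e1: "pathsum T Flim (\<omega>, zs) as = pathsum T Flim (\<omega>, zs) bs" using elim(1) a by blast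
      have e2: "msum D zs as = msum D zs bs" using elim(2) a by blast
      show "pathsum T Flim (\<omega>, zs) as - msum D zs as = pathsum T Flim (\<omega>, zs) bs - msum D zs bs"
        using e1 e2 by simp
    qed
  qed
  have FnewK: "classK M T R l Fnew"
    unfolding classK_def using Fnewi K2 FK3 by blast
  obtain r0 where r0: "r0 \<in> R" using Rne by blast
  have Zne: "Zs \<noteq> {}" unfolding Zs_def using r0 by (intro ex_in_conv[THEN iffD1] exI[of _ "replicate l r0"]) auto
  have aeB: "AE \<omega> in M. \<forall>zs\<in>Zs. (\<Sum>z\<in>R. exp (g (\<omega>, zs) + Fnew (\<omega>, zs) z) / real (card R)) \<le> exp c"
    using bnd aeG aeF
  proof eventually_elim
    case (elim \<omega>)
    show ?case
    proof
      fix zs assume zs: "zs \<in> Zs"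
      then have zs': "zs \<in> lists R" "length zs = l" unfolding Zs_def by auto
      have bn: "(\<Sum>z\<in>R. exp (Gt (L2 n) zs \<omega> + Ft n (\<omega>, zs) z) / real (card R)) \<le> exp c" for n
        unfolding Gt_def Ft_def
      proof (rule convex_bound[OF Lt2 fR _ cR])
        fix k show "(\<Sum>z\<in>R. exp (G k (\<omega>, zs) + Fs k (\<omega>, zs) z) / real (card R)) \<le> exp c"
          using elim(1) zs' by blast
      qed
      have lim: "(\<lambda>n. \<Sum>z\<in>R. exp (Gt (L2 n) zs \<omega> + Ft n (\<omega>, zs) z) / real (card R)) \<longlonglongrightarrow>
          (\<Sum>z\<in>R. exp (g (\<omega>, zs) + Flim (\<omega>, zs) z) / real (card R))"
      proof (intro tendsto_sum tendsto_divide tendsto_const tendsto_exp tendsto_add)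
        fix z assume z: "z \<in> R"
        show "(\<lambda>n. Gt (L2 n) zs \<omega>) \<longlonglongrightarrow> g (\<omega>, zs)" using elim(2) zs by blast
        show "(\<lambda>n. Ft n (\<omega>, zs) z) \<longlonglongrightarrow> Flim (\<omega>, zs) z" using elim(3) zs' z by blast
      qed (use cR in simp)
      have "(\<Sum>z\<in>R. exp (g (\<omega>, zs) + Flim (\<omega>, zs) z) / real (card R)) \<le> exp c"
        by (rule LIMSEQ_le_const2[OF lim]) (use bn in blast)
      moreover have "(\<Sum>z\<in>R. exp (g (\<omega>, zs) + Fnew (\<omega>, zs) z) / real (card R)) \<le> (\<Sum>z\<in>R. exp (g (\<omega>, zs) + Flim (\<omega>, zs) z) / real (card R))"
      proof (rule sum_mono)
        fix z assume z: "z \<in> R"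
        have "0 \<le> D zs z" unfolding D_def using mlim_ge[OF zs' z] by simp
        then have "Fnew (\<omega>, zs) z \<le> Flim (\<omega>, zs) z" unfolding Fnew_def by simp
        then show "exp (g (\<omega>, zs) + Fnew (\<omega>, zs) z) / real (card R) \<le> exp (g (\<omega>, zs) + Flim (\<omega>, zs) z) / real (card R)"
          using cR by (simp add: divide_right_mono)
      qed
      ultimately show "(\<Sum>z\<in>R. exp (g (\<omega>, zs) + Fnew (\<omega>, zs) z) / real (card R)) \<le> exp c" by linarith
    qed
  qed
  define phi where "phi \<omega> zs = ln (\<Sum>z\<in>R. exp (g (\<omega>, zs) + Fnew (\<omega>, zs) z) / real (card R))" for \<omega> zs
  have phim: "(\<lambda>\<omega>. phi \<omega> zs) \<in> borel_measurable M" if zs: "zs \<in> Zs" for zs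
  proof -
    have zs': "zs \<in> lists R" "length zs = l" using zs unfolding Zs_def by auto
    have sm: "(\<lambda>\<omega>. \<Sum>z\<in>R. exp (g (\<omega>, zs) + Fnew (\<omega>, zs) z) / real (card R)) \<in> borel_measurable M"
    proof (rule borel_measurable_sum)
      fix z assume z: "z \<in> R"
      have [measurable]: "(\<lambda>\<omega>. g (\<omega>, zs)) \<in> borel_measurable M" using gi[OF zs'] by auto
      have [measurable]: "(\<lambda>\<omega>. Fnew (\<omega>, zs) z) \<in> borel_measurable M" using Fnewi[OF zs' z] by auto
      show "(\<lambda>\<omega>. exp (g (\<omega>, zs) + Fnew (\<omega>, zs) z) / real (card R)) \<in> borel_measurable M" by measurable
    qed
    note sm[measurable]
    show ?thesis unfolding phi_def by measurable
  qed
  have KB: "KlF M R l Fnew g \<le> ereal c"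
  proof -
    have eqf: "(\<lambda>\<omega>. ereal (Max ((\<lambda>zs. ln (\<Sum>z\<in>R. exp (g (\<omega>, zs) + Fnew (\<omega>, zs) z) / real (card R)))
                 ` {zs. zs \<in> lists R \<and> length zs = l}))) = (\<lambda>\<omega>. ereal (Max ((\<lambda>zs. phi \<omega> zs) ` Zs)))"
      unfolding phi_def Zs_def by simp
    have mm: "(\<lambda>\<omega>. Max ((\<lambda>zs. phi \<omega> zs) ` Zs)) \<in> borel_measurable M"
      by (rule borel_measurable_Max[OF fZ phim])
    have "esssup M (\<lambda>\<omega>. ereal (Max ((\<lambda>zs. phi \<omega> zs) ` Zs))) \<le> ereal c"
    proof (rule esssup_I)
      show "(\<lambda>\<omega>. ereal (Max ((\<lambda>zs. phi \<omega> zs) ` Zs))) \<in> borel_measurable M" using mm by measurable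
      show "AE \<omega> in M. ereal (Max ((\<lambda>zs. phi \<omega> zs) ` Zs)) \<le> ereal c"
        using aeB
      proof eventually_elim
        case (elim \<omega>)
        have "\<forall>zs\<in>Zs. phi \<omega> zs \<le> c"
        proof
          fix zs assume zs: "zs \<in> Zs"
          have pos: "0 < (\<Sum>z\<in>R. exp (g (\<omega>, zs) + Fnew (\<omega>, zs) z) / real (card R))"
            by (rule sum_pos[OF fR Rne]) (use cR in simp)
          have "phi \<omega> zs \<le> ln (exp c)" unfolding phi_def using elim zs pos by (subst ln_le_cancel_iff) auto
          then show "phi \<omega> zs \<le> c" by simp
        qed
        then have "Max ((\<lambda>zs. phi \<omega> zs) ` Zs) \<le> c" using fZ Zne by (subst Max_le_iff) auto
        then show ?case by simp
      qed
    qed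
    then show ?thesis unfolding KlF_def eqf .
  qed
  have "underK M T R l g \<le> KlF M R l Fnew g"
    unfolding underK_def by (rule INF_lower) (simp add: FnewK)
  then show ?thesis using KB by simp
qed


lemma main_c:
  fixes M :: "'a measure" and T :: "int^'d \<Rightarrow> 'a \<Rightarrow> 'a" and R :: "(int^'d) set"
    and l :: nat and gk :: "nat \<Rightarrow> 'a \<times> (int^'d) list \<Rightarrow> real" and g :: "'a \<times> (int^'d) list \<Rightarrow> real"
    and c :: real
  assumes fR: "finite R" and Rne: "R \<noteq> {}"
    and es: "ergodic_system M T R"
    and Gi: "\<And>k zs. zs \<in> lists R \<Longrightarrow> length zs = l \<Longrightarrow> integrable M (\<lambda>\<omega>. gk k (\<omega>, zs))"
    and gi: "\<And>zs. zs \<in> lists R \<Longrightarrow> length zs = l \<Longrightarrow> integrable M (\<lambda>\<omega>. g (\<omega>, zs))"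
    and Gc: "\<And>zs. zs \<in> lists R \<Longrightarrow> length zs = l \<Longrightarrow>
           (\<lambda>k. \<integral>\<omega>. \<bar>gk k (\<omega>, zs) - g (\<omega>, zs)\<bar> \<partial>M) \<longlonglongrightarrow> 0"
    and lc: "liminf (\<lambda>k. underK M T R l (gk k)) < ereal c"
  shows "underK M T R l g \<le> ereal c"
proof -
  interpret prob_space M using es_prob[OF es] .
  define Zs where "Zs = {zs. zs \<in> lists R \<and> length zs = l}"
  define I where "I = Zs \<times> R"
  have fZ: "finite Zs" unfolding Zs_def using finite_Zs[OF fR] .
  have fI: "finite I" unfolding I_def using fZ fR by simp
  have cR: "0 < real (card R)" using fR Rne by (simp add: card_gt_0_iff)
  have "\<not> ereal c \<le> liminf (\<lambda>k. underK M T R l (gk k))" using lc by simp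
  then obtain y where y: "y < ereal c" "\<not> eventually (\<lambda>k. y < underK M T R l (gk k)) sequentially"
    unfolding le_Liminf_iff by blast
  have "frequently (\<lambda>k. underK M T R l (gk k) < ereal c) sequentially"
    unfolding frequently_def
  proof
    assume "eventually (\<lambda>k. \<not> underK M T R l (gk k) < ereal c) sequentially"
    then have "eventually (\<lambda>k. y < underK M T R l (gk k)) sequentially"
      by (rule eventually_mono) (use y(1) in auto)
    then show False using y(2) by simp
  qed
  then have inf: "infinite {k. underK M T R l (gk k) < ereal c}"
    unfolding cofinite_eq_sequentially[symmetric] frequently_cofinite .
  define S where "S = {k. underK M T R l (gk k) < ereal c}"
  define \<phi> where "\<phi> = enumerate S"
  have phm: "strict_mono \<phi>" unfolding \<phi>_def using inf S_def by (intro strict_monoI enumerate_mono) auto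
  have phS: "underK M T R l (gk (\<phi> j)) < ereal c" for j
    using enumerate_in_set[of S j] inf unfolding \<phi>_def S_def by auto
  have "\<forall>j. \<exists>F. classK M T R l F \<and> KlF M R l F (gk (\<phi> j)) < ereal c"
    using phS unfolding underK_def INF_less_iff by auto
  then obtain Fs0 where FK: "\<And>j. classK M T R l (Fs0 j)" and FKl: "\<And>j. KlF M R l (Fs0 j) (gk (\<phi> j)) < ereal c"
    by metis
  have Fi: "integrable M (\<lambda>\<omega>. Fs0 k (\<omega>, zs) z)" if "zs \<in> lists R" "length zs = l" "z \<in> R" for k zs z
    using FK[of k] that unfolding classK_def by blast
  have bnd1: "AE \<omega> in M. \<forall>zs. zs \<in> lists R \<and> length zs = l \<longrightarrow>
                 (\<Sum>z\<in>R. exp (gk (\<phi> j) (\<omega>, zs) + Fs0 j (\<omega>, zs) z) / real (card R)) \<le> exp c" for j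
  proof -
    have "AE \<omega> in M. ereal (Max ((\<lambda>zs. ln (\<Sum>z\<in>R. exp (gk (\<phi> j) (\<omega>, zs) + Fs0 j (\<omega>, zs) z) / real (card R)))
                                          ` {zs. zs \<in> lists R \<and> length zs = l})) \<le> KlF M R l (Fs0 j) (gk (\<phi> j))"
      unfolding KlF_def by (rule esssup_AE)
    then show ?thesis
    proof eventually_elim
      case (elim \<omega>)
      show ?case
      proof (intro allI impI)
        fix zs assume zs: "zs \<in> lists R \<and> length zs = l"
        have pos: "0 < (\<Sum>z\<in>R. exp (gk (\<phi> j) (\<omega>, zs) + Fs0 j (\<omega>, zs) z) / real (card R))"
          by (rule sum_pos[OF fR Rne]) (use cR in simp)
        have h1: "ln (\<Sum>z\<in>R. exp (gk (\<phi> j) (\<omega>, zs) + Fs0 j (\<omega>, zs) z) / real (card R)) \<le>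
          Max ((\<lambda>zs. ln (\<Sum>z\<in>R. exp (gk (\<phi> j) (\<omega>, zs) + Fs0 j (\<omega>, zs) z) / real (card R)))
                                          ` {zs. zs \<in> lists R \<and> length zs = l})"
          by (rule Max_ge) (use finite_Zs[OF fR] zs in auto)
        have h2: "ereal (Max ((\<lambda>zs. ln (\<Sum>z\<in>R. exp (gk (\<phi> j) (\<omega>, zs) + Fs0 j (\<omega>, zs) z) / real (card R)))
                                          ` {zs. zs \<in> lists R \<and> length zs = l})) < ereal c"
          by (rule le_less_trans[OF elim FKl[of j]])
        have "ln (\<Sum>z\<in>R. exp (gk (\<phi> j) (\<omega>, zs) + Fs0 j (\<omega>, zs) z) / real (card R)) < c"
          using h1 h2 by simp
        then have "exp (ln (\<Sum>z\<in>R. exp (gk (\<phi> j) (\<omega>, zs) + Fs0 j (\<omega>, zs) z) / real (card R))) < exp c" by simp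
        then show "(\<Sum>z\<in>R. exp (gk (\<phi> j) (\<omega>, zs) + Fs0 j (\<omega>, zs) z) / real (card R)) \<le> exp c"
          using pos by simp
      qed
    qed
  qed
  have bndA: "AE \<omega> in M. \<forall>j zs. zs \<in> lists R \<and> length zs = l \<longrightarrow>
                 (\<Sum>z\<in>R. exp (gk (\<phi> j) (\<omega>, zs) + Fs0 j (\<omega>, zs) z) / real (card R)) \<le> exp c"
    using bnd1 unfolding AE_all_countable by blast
  define C where "C = c + ln (real (card R))"
  have expC: "exp C = real (card R) * exp c" unfolding C_def using cR by (simp add: exp_add)
  have ptb: "AE \<omega> in M. \<forall>j zs z. zs \<in> lists R \<and> length zs = l \<and> z \<in> R \<longrightarrow> gk (\<phi> j) (\<omega>, zs) + Fs0 j (\<omega>, zs) z \<le> C"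
    using bndA
  proof eventually_elim
    case (elim \<omega>)
    show ?case
    proof (intro allI impI)
      fix j zs z assume a: "zs \<in> lists R \<and> length zs = l \<and> z \<in> R"
      have "exp (gk (\<phi> j) (\<omega>, zs) + Fs0 j (\<omega>, zs) z) / real (card R) \<le> (\<Sum>z\<in>R. exp (gk (\<phi> j) (\<omega>, zs) + Fs0 j (\<omega>, zs) z) / real (card R))"
        by (rule member_le_sum) (use a fR in auto)
      also have "\<dots> \<le> exp c" using elim a by blast
      finally have "exp (gk (\<phi> j) (\<omega>, zs) + Fs0 j (\<omega>, zs) z) \<le> exp C" unfolding expC using cR by (simp add: field_simps)
      then show "gk (\<phi> j) (\<omega>, zs) + Fs0 j (\<omega>, zs) z \<le> C" by simp
    qed
  qed
  have "\<forall>zs\<in>Zs. \<exists>K>0. \<forall>j. (\<integral>\<omega>. \<bar>gk (\<phi> j) (\<omega>, zs) - g (\<omega>, zs)\<bar> \<partial>M) \<le> K"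
  proof
    fix zs assume "zs \<in> Zs"
    then have zs: "zs \<in> lists R" "length zs = l" unfolding Zs_def by auto
    have "(\<lambda>j. \<integral>\<omega>. \<bar>gk (\<phi> j) (\<omega>, zs) - g (\<omega>, zs)\<bar> \<partial>M) \<longlonglongrightarrow> 0"
      using LIMSEQ_subseq_LIMSEQ[OF Gc[OF zs] phm] by (simp add: o_def)
    then have "Bseq (\<lambda>j. \<integral>\<omega>. \<bar>gk (\<phi> j) (\<omega>, zs) - g (\<omega>, zs)\<bar> \<partial>M)"
      by (intro convergent_imp_Bseq) (auto simp: convergent_def)
    then obtain K where "0 < K" "\<forall>j. norm (\<integral>\<omega>. \<bar>gk (\<phi> j) (\<omega>, zs) - g (\<omega>, zs)\<bar> \<partial>M) \<le> K" by (rule BseqE)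
    then show "\<exists>K>0. \<forall>j. (\<integral>\<omega>. \<bar>gk (\<phi> j) (\<omega>, zs) - g (\<omega>, zs)\<bar> \<partial>M) \<le> K" by auto
  qed
  then obtain Kz where Kz: "\<And>zs. zs \<in> Zs \<Longrightarrow> 0 < Kz zs" "\<And>zs j. zs \<in> Zs \<Longrightarrow> (\<integral>\<omega>. \<bar>gk (\<phi> j) (\<omega>, zs) - g (\<omega>, zs)\<bar> \<partial>M) \<le> Kz zs"
    by metis
  define Bg where "Bg = (\<Sum>zs\<in>Zs. Kz zs + (\<integral>\<omega>. \<bar>g (\<omega>, zs)\<bar> \<partial>M))"
  have EGb: "\<bar>\<integral>\<omega>. gk (\<phi> j) (\<omega>, zs) \<partial>M\<bar> \<le> Bg" if zs: "zs \<in> lists R" "length zs = l" for j zs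
  proof -
    have zZ: "zs \<in> Zs" using zs unfolding Zs_def by auto
    have "\<bar>\<integral>\<omega>. gk (\<phi> j) (\<omega>, zs) \<partial>M\<bar> \<le> (\<integral>\<omega>. \<bar>gk (\<phi> j) (\<omega>, zs)\<bar> \<partial>M)" by (rule integral_abs_bound)
    also have "\<dots> \<le> (\<integral>\<omega>. \<bar>gk (\<phi> j) (\<omega>, zs) - g (\<omega>, zs)\<bar> + \<bar>g (\<omega>, zs)\<bar> \<partial>M)"
      by (rule integral_mono) (use Gi[OF zs] gi[OF zs] in auto)
    also have "\<dots> = (\<integral>\<omega>. \<bar>gk (\<phi> j) (\<omega>, zs) - g (\<omega>, zs)\<bar> \<partial>M) + (\<integral>\<omega>. \<bar>g (\<omega>, zs)\<bar> \<partial>M)"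
      using Gi[OF zs] gi[OF zs] by (simp add: Bochner_Integration.integral_add)
    also have "\<dots> \<le> Kz zs + (\<integral>\<omega>. \<bar>g (\<omega>, zs)\<bar> \<partial>M)" using Kz(2)[OF zZ] by simp
    also have "\<dots> \<le> Bg" unfolding Bg_def
    proof (rule member_le_sum[OF zZ _ fZ])
      fix x assume "x \<in> Zs - {zs}"
      then have "0 < Kz x" using Kz(1) by auto
      moreover have "0 \<le> (\<integral>\<omega>. \<bar>g (\<omega>, x)\<bar> \<partial>M)" by (rule integral_nonneg_AE) auto
      ultimately show "0 \<le> Kz x + (\<integral>\<omega>. \<bar>g (\<omega>, x)\<bar> \<partial>M)" by simp
    qed
    finally show ?thesis .
  qed
  define m where "m j zs z = (\<integral>\<omega>. Fs0 j (\<omega>, zs) z \<partial>M)" for j zs z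
  have mup: "m j zs z \<le> C + Bg" if v: "zs \<in> lists R" "length zs = l" "z \<in> R" for j zs z
  proof -
    have "m j zs z \<le> (\<integral>\<omega>. C - gk (\<phi> j) (\<omega>, zs) \<partial>M)" unfolding m_def
    proof (rule integral_mono_AE)
      show "integrable M (\<lambda>\<omega>. Fs0 j (\<omega>, zs) z)" by (rule Fi[OF v])
      show "integrable M (\<lambda>\<omega>. C - gk (\<phi> j) (\<omega>, zs))" using Gi[OF v(1,2)] by simp
      show "AE \<omega> in M. Fs0 j (\<omega>, zs) z \<le> C - gk (\<phi> j) (\<omega>, zs)"
        using ptb
      proof eventually_elim
        case (elim \<omega>)
        then have "gk (\<phi> j) (\<omega>, zs) + Fs0 j (\<omega>, zs) z \<le> C" using v by blast
        then show ?case by simp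
      qed
    qed
    also have "\<dots> = C - (\<integral>\<omega>. gk (\<phi> j) (\<omega>, zs) \<partial>M)" using Gi[OF v(1,2)]
      by (simp add: Bochner_Integration.integral_diff prob_space)
    also have "\<dots> \<le> C + Bg" using EGb[OF v(1,2), of j] by linarith
    finally show ?thesis .
  qed
  have mlow: "- (real l * (C + Bg)) \<le> m j zs z" if v: "zs \<in> lists R" "length zs = l" "z \<in> R" for j zs z
  proof -
    have as: "z # zs \<in> lists R" "length (z # zs) = Suc l" using v by auto
    have K2: "\<forall>n as. l \<le> n \<and> as \<in> lists R \<and> length as = n \<longrightarrow>
         (\<integral>\<omega>. pathsum T (Fs0 j) (\<omega>, drop (n - l) as) as \<partial>M) = 0"
      using FK[of j] unfolding classK_def by (elim conjE)
    have "(\<integral>\<omega>. pathsum T (Fs0 j) (\<omega>, drop (Suc l - l) (z # zs)) (z # zs) \<partial>M) = 0"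
      using K2[rule_format, of "Suc l" "z # zs"] as by simp
    then have "(\<integral>\<omega>. pathsum T (Fs0 j) (\<omega>, zs) (z # zs) \<partial>M) = 0" by simp
    moreover have "(\<integral>\<omega>. pathsum T (Fs0 j) (\<omega>, zs) (z # zs) \<partial>M) = msum (m j) zs (z # zs)"
      using path_mean[OF es, of l "Fs0 j", OF Fi as(1) v(1,2)] unfolding m_def by auto
    ultimately have "m j zs z + msum (m j) (lsh z zs) zs = 0" by simp
    moreover have "msum (m j) (lsh z zs) zs \<le> real (length zs) * (C + Bg)"
      by (rule msum_le[OF mup v(1)]) (use lsh_R[of zs R z] v in auto)
    ultimately show ?thesis using v(2) by simp
  qed
  define P where "P i r = convergent (\<lambda>j. m (r j) (fst i) (snd i))"
    for i :: "(int^'d) list \<times> (int^'d)" and r :: "nat \<Rightarrow> nat"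
  have "\<exists>r::nat\<Rightarrow>nat. strict_mono r \<and> (\<forall>i\<in>I. P i r)"
  proof (rule finite_subseq[OF fI])
    fix i and r :: "nat \<Rightarrow> nat" assume i: "i \<in> I" and r: "strict_mono r"
    then have v: "fst i \<in> lists R" "length (fst i) = l" "snd i \<in> R" unfolding I_def Zs_def by (auto simp: mem_Times_iff)
    have "bounded (range (\<lambda>j. m (r j) (fst i) (snd i)))"
    proof (rule boundedI)
      fix x assume "x \<in> range (\<lambda>j. m (r j) (fst i) (snd i))"
      then obtain j where x: "x = m (r j) (fst i) (snd i)" by auto
      have a: "m (r j) (fst i) (snd i) \<le> C + Bg" by (rule mup[OF v])
      have b: "- (real l * (C + Bg)) \<le> m (r j) (fst i) (snd i)" by (rule mlow[OF v])
      have c: "real l * (C + Bg) \<le> real l * \<bar>C + Bg\<bar>" by (rule mult_left_mono) auto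
      have d: "0 \<le> real l * \<bar>C + Bg\<bar>" by simp
      have e: "C + Bg \<le> \<bar>C + Bg\<bar>" by simp
      show "norm x \<le> \<bar>C + Bg\<bar> + real l * \<bar>C + Bg\<bar>"
        unfolding x real_norm_def abs_le_iff using a b c d e by (intro conjI) linarith+
    qed
    then obtain lm r' where r': "strict_mono r'" "((\<lambda>j. m (r j) (fst i) (snd i)) \<circ> r') \<longlonglongrightarrow> lm"
      using bounded_imp_convergent_subsequence by blast
    then have "P i (r \<circ> r')" unfolding P_def by (auto simp: convergent_def o_def)
    then show "\<exists>r'. strict_mono r' \<and> P i (r \<circ> r')" using r'(1) by blast
  next
    fix i and r r' :: "nat \<Rightarrow> nat" assume "i \<in> I" "P i r" "strict_mono r'"
    then show "P i (r \<circ> r')" unfolding P_def using convergent_subseq_convergent[of _ r'] by (auto simp: o_def)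
  qed
  then obtain r1 where r1: "strict_mono r1" "\<forall>i\<in>I. P i r1" by blast
  have sm: "strict_mono (\<phi> \<circ> r1)" using phm r1(1) by (rule strict_mono_o)
  show ?thesis
  proof (rule core[OF es fR Rne gi, where G = "\<lambda>j. gk (\<phi> (r1 j))" and Fs = "\<lambda>j. Fs0 (r1 j)"])
    show "\<And>k zs. zs \<in> lists R \<Longrightarrow> length zs = l \<Longrightarrow> integrable M (\<lambda>\<omega>. gk (\<phi> (r1 k)) (\<omega>, zs))"
      by (rule Gi)
    show "(\<lambda>k. \<integral>\<omega>. \<bar>gk (\<phi> (r1 k)) (\<omega>, zs) - g (\<omega>, zs)\<bar> \<partial>M) \<longlonglongrightarrow> 0" if "zs \<in> lists R" "length zs = l" for zs
      using LIMSEQ_subseq_LIMSEQ[OF Gc[OF that] sm] by (simp add: o_def)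
    show "\<And>k. classK M T R l (Fs0 (r1 k))" by (rule FK)
    show "AE \<omega> in M. \<forall>k zs. zs \<in> lists R \<and> length zs = l \<longrightarrow>
                 (\<Sum>z\<in>R. exp (gk (\<phi> (r1 k)) (\<omega>, zs) + Fs0 (r1 k) (\<omega>, zs) z) / real (card R)) \<le> exp c"
      using bndA by eventually_elim blast
    show "convergent (\<lambda>k. \<integral>\<omega>. Fs0 (r1 k) (\<omega>, zs) z \<partial>M)" if "zs \<in> lists R" "length zs = l" "z \<in> R" for zs z
    proof -
      have "(zs, z) \<in> I" using that unfolding I_def Zs_def by auto
      then show ?thesis using r1(2) unfolding P_def m_def by auto
    qed
  qed
qed

theorem lemma2p14:
  fixes M :: "'a measure" and T :: "int^'d \<Rightarrow> 'a \<Rightarrow> 'a" and R :: "(int^'d) set"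
    and l :: nat and gk :: "nat \<Rightarrow> 'a \<times> (int^'d) list \<Rightarrow> real" and g :: "'a \<times> (int^'d) list \<Rightarrow> real"
  assumes "finite R" and "R \<noteq> {}"
    and "ergodic_system M T R"
    and "\<And>k zs. zs \<in> lists R \<Longrightarrow> length zs = l \<Longrightarrow> integrable M (\<lambda>\<omega>. gk k (\<omega>, zs))"
    and "\<And>zs. zs \<in> lists R \<Longrightarrow> length zs = l \<Longrightarrow> integrable M (\<lambda>\<omega>. g (\<omega>, zs))"
    and "\<And>zs. zs \<in> lists R \<Longrightarrow> length zs = l \<Longrightarrow>
           (\<lambda>k. \<integral>\<omega>. \<bar>gk k (\<omega>, zs) - g (\<omega>, zs)\<bar> \<partial>M) \<longlonglongrightarrow> 0"
  shows "underK M T R l g \<le> liminf (\<lambda>k. underK M T R l (gk k))"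
proof (rule ccontr)
  assume "\<not> underK M T R l g \<le> liminf (\<lambda>k. underK M T R l (gk k))"
  then have "liminf (\<lambda>k. underK M T R l (gk k)) < underK M T R l g" by simp
  then obtain c where c: "liminf (\<lambda>k. underK M T R l (gk k)) < ereal c" "ereal c < underK M T R l g"
    using ereal_dense2 by blast
  have "underK M T R l g \<le> ereal c" by (rule main_c[OF assms c(1)])
  then show False using c(2) by simp
qed

end
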